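(* Let $q=(q_1,q_2,q_3)\in K^3$. Define the linear map $\Gamma_q:\mathcal{H}_{\mathbb{T}}\to\mathbf{WQSym}$ by, for $\mathcal{T}\in\mathbb{T}_n$, $$\Gamma_q(\mathcal{T})=\sum_{f\in\mathcal{P}(\mathcal{T})}q_1^{\ell_1(f)}q_2^{\ell_2(f)}q_3^{\ell_3(f)}\,f(1)\ldots f(n).$$ Then $\Gamma_q$ is a homogeneous surjective Hopf algebra morphism from $(\mathcal{H}_{\mathbb{T}},.,\Delta)$ to $(\mathbf{WQSym},.,\Delta)$. Moreover $j\circ\Gamma_{(q_2,q_1,q_3)}=\Gamma_{(q_1,q_2,q_3)}\circ\iota$.
   Context: Let $K$ be a field; convention $0^0=1$. For $n\geq0$, $[n]=\{1,\ldots,n\}$, $\mathbb{T}_n$ is the set of topologies on $[n]$, $\mathcal{H}_{\mathbb{T}}$ the $K$-vector space with basis $\bigsqcup_n\mathbb{T}_n$, graded by $n$. For a topology $\mathcal{T}$ on finite $X$: $i\leq_{\mathcal{T}}j$ iff every open set containing $i$ contains $j$; $i\sim_{\mathcal{T}}j$ iff $i\leq_{\mathcal{T}}j$ and $j\leq_{\mathcal{T}}i$; $i<_{\mathcal{T}}j$ iff $i\leq_{\mathcal{T}}j$ and not $j\leq_{\mathcal{T}}i$. $\mathcal{T}_{\mid Y}=\{O\cap Y\mid O\in\mathcal{T}\}$; for $X$ totally ordered of size $m$, $\mathrm{Std}(\mathcal{T})\in\mathbb{T}_m$ is the transport along the increasing bijection $X\to[m]$. Product on $\mathcal{H}_{\mathbb{T}}$: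 $\mathcal{T}.\mathcal{T}'$ ($\mathcal{T}\in\mathbb{T}_n,\mathcal{T}'\in\mathbb{T}_{n'}$) is the topology on $[n+n']$ with open sets $O\sqcup\{k+n\mid k\in O'\}$, $O\in\mathcal{T},O'\in\mathcal{T}'$; coproduct $\Delta(\mathcal{T})=\sum_{O\in\mathcal{T}}\mathrm{Std}(\mathcal{T}_{\mid[n]\setminus O})\otimes\mathrm{Std}(\mathcal{T}_{\mid O})$; $\iota(\mathcal{T})=\{X\setminus O\mid O\in\mathcal{T}\}$. $\mathbf{WQSym}$: a packed word of length $n$ is a word $f=f(1)\ldots f(n)$ of positive integers with $\{f(1),\ldots,f(n)\}=[\max f]$ (the empty word has $\max=0$). For a word $w$ of positive integers, $\mathrm{Pack}(w)$ is obtained by applying the unique increasing bijection from its set of letters onto some $[m]$; $w_{\mid I}$ is the subword of letters lying in $I$. $\mathbf{WQSym}$ has basis the packed words, product $f.f'=\sum f''$ over packed words $f''$ of length $n+n'$ with $\mathrm{Pack}(f''(1)\ldots f''(n))=f$ and $\mathrm{Pack}(f''(n+1)\ldots f''(n+n'))=f'$ ($n,n'$ the lengths of $f,f'$), and coproduct $\Delta(f)=\sum_{k=0}^{\max f}f_{\mid[k]}\otimes\mathrm{Pack}(f_{\mid\mathbb{N}_{>0}\setminus[k]})$; it is a graded (by length) Hopf algebra. $j$ is the linear involution sending a packed word $f$ to the word $(\max f+1-f(1))\ldots(\max f+1-f(n))$. A generalized T-partition of $\mathcal{T}\in\mathbb{T}_n$ is a surjection $f:[n]\to[p]$ (some $p\ge0$)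 such that $i\leq_{\mathcal{T}}j\Rightarrow f(i)\leq f(j)$, identified with the packed word $f(1)\ldots f(n)$; $\mathcal{P}(\mathcal{T})$ is their set. For $f\in\mathcal{P}(\mathcal{T})$: $\ell_1(f)=\sharp\{(i,j)\mid i<_{\mathcal{T}}j,\ i<j,\ f(i)=f(j)\}$; $\ell_2(f)=\sharp\{(i,j)\mid i<_{\mathcal{T}}j,\ i>j,\ f(i)=f(j)\}$; $\ell_3(f)=\sharp\{(i,j,k)\mid i<j<k,\ i\sim_{\mathcal{T}}k,\ \text{not } i\sim_{\mathcal{T}}j,\ \text{not } j\sim_{\mathcal{T}}k,\ f(i)=f(j)=f(k)\}$. *)

theory Defs
  imports Main "HOL-Library.Poly_Mapping"
begin

definition pm_smult :: "'k::field \<Rightarrow> ('b \<Rightarrow>\<^sub>0 'k) \<Rightarrow> ('b \<Rightarrow>\<^sub>0 'k)" where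
  "pm_smult c p = Poly_Mapping.map (\<lambda>v. c * v) p"

definition lin_ext :: "('b \<Rightarrow> ('c \<Rightarrow>\<^sub>0 'k::field)) \<Rightarrow> ('b \<Rightarrow>\<^sub>0 'k) \<Rightarrow> ('c \<Rightarrow>\<^sub>0 'k)" where
  "lin_ext g x = (\<Sum>b\<in>Poly_Mapping.keys x. pm_smult (Poly_Mapping.lookup x b) (g b))"

definition bilin_ext :: "('b \<Rightarrow> 'c \<Rightarrow> ('d \<Rightarrow>\<^sub>0 'k::field)) \<Rightarrow> ('b \<Rightarrow>\<^sub>0 'k) \<Rightarrow> ('c \<Rightarrow>\<^sub>0 'k) \<Rightarrow> ('d \<Rightarrow>\<^sub>0 'k)" where
  "bilin_ext m x y = (\<Sum>b\<in>Poly_Mapping.keys x. \<Sum>c\<in>Poly_Mapping.keys y. pm_smult (Poly_Mapping.lookup x b * Poly_Mapping.lookup y c) (m b c))"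

definition tensor_map :: "(('b \<Rightarrow>\<^sub>0 'k::field) \<Rightarrow> ('c \<Rightarrow>\<^sub>0 'k)) \<Rightarrow> (('d \<Rightarrow>\<^sub>0 'k) \<Rightarrow> ('e \<Rightarrow>\<^sub>0 'k))
     \<Rightarrow> (('b \<times> 'd) \<Rightarrow>\<^sub>0 'k) \<Rightarrow> (('c \<times> 'e) \<Rightarrow>\<^sub>0 'k)" where
  "tensor_map F G = lin_ext (\<lambda>(b, d).
      (\<Sum>u\<in>Poly_Mapping.keys (F (Poly_Mapping.single b 1)). \<Sum>v\<in>Poly_Mapping.keys (G (Poly_Mapping.single d 1)).
         Poly_Mapping.single (u, v) (Poly_Mapping.lookup (F (Poly_Mapping.single b 1)) u * Poly_Mapping.lookup (G (Poly_Mapping.single d 1)) v)))"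

definition is_topology :: "nat set \<Rightarrow> nat set set \<Rightarrow> bool" where
  "is_topology X T \<longleftrightarrow> T \<subseteq> Pow X \<and> {} \<in> T \<and> X \<in> T \<and>
     (\<forall>A\<in>T. \<forall>B\<in>T. A \<union> B \<in> T \<and> A \<inter> B \<in> T)"

definition topologies :: "nat \<Rightarrow> nat set set set" where
  "topologies n = {T. is_topology {1..n} T}"

definition all_topologies :: "nat set set set" where
  "all_topologies = (\<Union>n. topologies n)"

definition tdeg :: "nat set set \<Rightarrow> nat" where
  "tdeg T = card (\<Union>T)"

definition tleq :: "nat set set \<Rightarrow> nat \<Rightarrow> nat \<Rightarrow> bool" where
  "tleq T i j \<longleftrightarrow> (\<forall>U\<in>T. i \<in> U \<longrightarrow> j \<in> U)"

definition tsim :: "nat set set \<Rightarrow> nat \<Rightarrow> nat \<Rightarrow> bool" where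
  "tsim T i j \<longleftrightarrow> tleq T i j \<and> tleq T j i"

definition tless :: "nat set set \<Rightarrow> nat \<Rightarrow> nat \<Rightarrow> bool" where
  "tless T i j \<longleftrightarrow> tleq T i j \<and> \<not> tleq T j i"

definition restr :: "nat set set \<Rightarrow> nat set \<Rightarrow> nat set set" where
  "restr T Y = (\<lambda>U. U \<inter> Y) ` T"

text \<open>the increasing bijection from a finite X \<subseteq> \<nat> onto [card X]\<close>
definition std_map :: "nat set \<Rightarrow> nat \<Rightarrow> nat" where
  "std_map X i = card {x \<in> X. x \<le> i}"

definition std :: "nat set \<Rightarrow> nat set set \<Rightarrow> nat set set" where
  "std X T = (\<lambda>U. std_map X ` U) ` T"

definition topo_prod :: "nat set set \<Rightarrow> nat set set \<Rightarrow> nat set set" where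
  "topo_prod T T' = {U \<union> (\<lambda>k. k + tdeg T) ` U' | U U'. U \<in> T \<and> U' \<in> T'}"

definition topo_iota :: "nat set set \<Rightarrow> nat set set" where
  "topo_iota T = {{1..tdeg T} - U | U. U \<in> T}"

definition topo_delta :: "nat set set \<Rightarrow> (nat set set \<times> nat set set) \<Rightarrow>\<^sub>0 'k::field" where
  "topo_delta T = (\<Sum>U\<in>T. Poly_Mapping.single
      (std ({1..tdeg T} - U) (restr T ({1..tdeg T} - U)), std U (restr T U)) 1)"

definition HT_mult :: "(nat set set \<Rightarrow>\<^sub>0 'k::field) \<Rightarrow> (nat set set \<Rightarrow>\<^sub>0 'k) \<Rightarrow> (nat set set \<Rightarrow>\<^sub>0 'k)" where
  "HT_mult = bilin_ext (\<lambda>T T'. Poly_Mapping.single (topo_prod T T') 1)"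

definition HT_unit :: "nat set set \<Rightarrow>\<^sub>0 'k::field" where
  "HT_unit = Poly_Mapping.single {{}} 1"

definition HT_delta :: "(nat set set \<Rightarrow>\<^sub>0 'k::field) \<Rightarrow> ((nat set set \<times> nat set set) \<Rightarrow>\<^sub>0 'k)" where
  "HT_delta = lin_ext topo_delta"

definition HT_counit :: "(nat set set \<Rightarrow>\<^sub>0 'k::field) \<Rightarrow> 'k" where
  "HT_counit x = Poly_Mapping.lookup x {{}}"

definition HT_iota :: "(nat set set \<Rightarrow>\<^sub>0 'k::field) \<Rightarrow> (nat set set \<Rightarrow>\<^sub>0 'k)" where
  "HT_iota = lin_ext (\<lambda>T. Poly_Mapping.single (topo_iota T) 1)"

definition packed :: "nat list \<Rightarrow> bool" where
  "packed w \<longleftrightarrow> (\<exists>m. set w = {1..m})"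

definition wmax :: "nat list \<Rightarrow> nat" where
  "wmax w = (if w = [] then 0 else Max (set w))"

definition pack :: "nat list \<Rightarrow> nat list" where
  "pack w = map (std_map (set w)) w"

definition wq_prod :: "nat list \<Rightarrow> nat list \<Rightarrow> nat list \<Rightarrow>\<^sub>0 'k::field" where
  "wq_prod f g = (\<Sum>w\<in>{w. packed w \<and> length w = length f + length g \<and>
        pack (take (length f) w) = f \<and> pack (drop (length f) w) = g}. Poly_Mapping.single w 1)"

definition wq_delta :: "nat list \<Rightarrow> (nat list \<times> nat list) \<Rightarrow>\<^sub>0 'k::field" where
  "wq_delta f = (\<Sum>k\<in>{0..wmax f}. Poly_Mapping.single
      (filter (\<lambda>x. x \<in> {1..k}) f, pack (filter (\<lambda>x. x \<notin> {1..k}) f)) 1)"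

definition wq_j :: "nat list \<Rightarrow> nat list" where
  "wq_j f = map (\<lambda>x. wmax f + 1 - x) f"

definition WQ_mult :: "(nat list \<Rightarrow>\<^sub>0 'k::field) \<Rightarrow> (nat list \<Rightarrow>\<^sub>0 'k) \<Rightarrow> (nat list \<Rightarrow>\<^sub>0 'k)" where
  "WQ_mult = bilin_ext wq_prod"

definition WQ_unit :: "nat list \<Rightarrow>\<^sub>0 'k::field" where
  "WQ_unit = Poly_Mapping.single [] 1"

definition WQ_delta :: "(nat list \<Rightarrow>\<^sub>0 'k::field) \<Rightarrow> ((nat list \<times> nat list) \<Rightarrow>\<^sub>0 'k)" where
  "WQ_delta = lin_ext wq_delta"

definition WQ_counit :: "(nat list \<Rightarrow>\<^sub>0 'k::field) \<Rightarrow> 'k" where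
  "WQ_counit x = Poly_Mapping.lookup x []"

definition WQ_j :: "(nat list \<Rightarrow>\<^sub>0 'k::field) \<Rightarrow> (nat list \<Rightarrow>\<^sub>0 'k)" where
  "WQ_j = lin_ext (\<lambda>f. Poly_Mapping.single (wq_j f) 1)"

text \<open>letter f(i) of a word, 1-based\<close>
definition wat :: "nat list \<Rightarrow> nat \<Rightarrow> nat" where
  "wat w i = w ! (i - 1)"

definition Tpartitions :: "nat set set \<Rightarrow> nat list set" where
  "Tpartitions T = {w. packed w \<and> length w = tdeg T \<and>
     (\<forall>i\<in>{1..tdeg T}. \<forall>j\<in>{1..tdeg T}. tleq T i j \<longrightarrow> wat w i \<le> wat w j)}"

definition ell1 :: "nat set set \<Rightarrow> nat list \<Rightarrow> nat" where
  "ell1 T f = card {(i, j). i \<in> {1..tdeg T} \<and> j \<in> {1..tdeg T} \<and>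
      tless T i j \<and> i < j \<and> wat f i = wat f j}"

definition ell2 :: "nat set set \<Rightarrow> nat list \<Rightarrow> nat" where
  "ell2 T f = card {(i, j). i \<in> {1..tdeg T} \<and> j \<in> {1..tdeg T} \<and>
      tless T i j \<and> i > j \<and> wat f i = wat f j}"

definition ell3 :: "nat set set \<Rightarrow> nat list \<Rightarrow> nat" where
  "ell3 T f = card {(i, j, k). i \<in> {1..tdeg T} \<and> j \<in> {1..tdeg T} \<and> k \<in> {1..tdeg T} \<and>
      i < j \<and> j < k \<and> tsim T i k \<and> \<not> tsim T i j \<and> \<not> tsim T j k \<and>
      wat f i = wat f j \<and> wat f j = wat f k}"

definition gamma_basis :: "'k::field \<Rightarrow> 'k \<Rightarrow> 'k \<Rightarrow> nat set set \<Rightarrow> nat list \<Rightarrow>\<^sub>0 'k" where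
  "gamma_basis q1 q2 q3 T = (\<Sum>f\<in>Tpartitions T.
      Poly_Mapping.single f (q1 ^ ell1 T f * q2 ^ ell2 T f * q3 ^ ell3 T f))"

definition Gamma :: "'k::field \<Rightarrow> 'k \<Rightarrow> 'k \<Rightarrow> (nat set set \<Rightarrow>\<^sub>0 'k) \<Rightarrow> (nat list \<Rightarrow>\<^sub>0 'k)" where
  "Gamma q1 q2 q3 = lin_ext (gamma_basis q1 q2 q3)"

end

theory Submission
  imports Defs
begin


abbreviation lk where "lk \<equiv> Poly_Mapping.lookup"

lemma lookup_pm_smult[simp]: "lk (pm_smult c p) k = c * lk p k"
  by (simp add: pm_smult_def map.rep_eq when_def)

lemma lookup_lin_ext: "lk (lin_ext g x) w = (\<Sum>b\<in>Poly_Mapping.keys x. lk x b * lk (g b) w)"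
  by (simp add: lin_ext_def lookup_sum)

lemma lookup_lin_ext_sup:
  assumes "finite S" "Poly_Mapping.keys x \<subseteq> S"
  shows "lk (lin_ext g x) w = (\<Sum>b\<in>S. lk x b * lk (g b) w)"
proof -
  have "lk (lin_ext g x) w = (\<Sum>b\<in>Poly_Mapping.keys x. lk x b * lk (g b) w)"
    by (simp add: lookup_lin_ext)
  also have "\<dots> = (\<Sum>b\<in>S. lk x b * lk (g b) w)"
    by (rule sum.mono_neutral_left) (use assms in \<open>auto simp: in_keys_iff\<close>)
  finally show ?thesis .
qed

lemma keys_lin_ext: "Poly_Mapping.keys (lin_ext g x) \<subseteq> (\<Union>b\<in>Poly_Mapping.keys x. Poly_Mapping.keys (g b))"
proof
  fix w assume w: "w \<in> Poly_Mapping.keys (lin_ext g x)"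
  show "w \<in> (\<Union>b\<in>Poly_Mapping.keys x. Poly_Mapping.keys (g b))"
  proof (rule ccontr)
    assume "\<not> ?thesis"
    then have "\<forall>b\<in>Poly_Mapping.keys x. lk (g b) w = 0" by (auto simp: in_keys_iff)
    then have "lk (lin_ext g x) w = 0" by (simp add: lookup_lin_ext)
    with w show False by (simp add: in_keys_iff)
  qed
qed

lemma lin_ext_cong: "(\<And>b. b \<in> Poly_Mapping.keys x \<Longrightarrow> g b = g' b) \<Longrightarrow> lin_ext g x = lin_ext g' x"
  by (simp add: lin_ext_def)

lemma lin_ext_comp: "lin_ext g (lin_ext h x) = lin_ext (\<lambda>b. lin_ext g (h b)) x"
proof (rule poly_mapping_eqI)
  fix w
  define S where "S = (\<Union>b\<in>Poly_Mapping.keys x. Poly_Mapping.keys (h b))"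
  have fS: "finite S" by (simp add: S_def)
  have "lk (lin_ext g (lin_ext h x)) w = (\<Sum>u\<in>S. lk (lin_ext h x) u * lk (g u) w)"
    by (rule lookup_lin_ext_sup[OF fS]) (simp add: S_def keys_lin_ext)
  also have "\<dots> = (\<Sum>u\<in>S. \<Sum>b\<in>Poly_Mapping.keys x. lk x b * (lk (h b) u * lk (g u) w))"
    by (simp add: lookup_lin_ext sum_distrib_right mult.assoc)
  also have "\<dots> = (\<Sum>b\<in>Poly_Mapping.keys x. lk x b * (\<Sum>u\<in>S. lk (h b) u * lk (g u) w))"
    by (subst sum.swap) (simp add: sum_distrib_left)
  also have "\<dots> = (\<Sum>b\<in>Poly_Mapping.keys x. lk x b * lk (lin_ext g (h b)) w)"
    by (rule sum.cong[OF refl], subst lookup_lin_ext_sup[OF fS]) (auto simp: S_def)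
  also have "\<dots> = lk (lin_ext (\<lambda>b. lin_ext g (h b)) x) w" by (simp add: lookup_lin_ext)
  finally show "lk (lin_ext g (lin_ext h x)) w = lk (lin_ext (\<lambda>b. lin_ext g (h b)) x) w" .
qed

lemma lin_ext_single: "lin_ext g (Poly_Mapping.single b c) = pm_smult c (g b)"
  by (rule poly_mapping_eqI, subst lookup_lin_ext_sup[of "{b}"]) auto

lemma pm_smult_1[simp]: "pm_smult 1 p = p"
  by (rule poly_mapping_eqI) simp

lemma lin_ext_single1[simp]: "lin_ext g (Poly_Mapping.single b 1) = g b"
  by (simp add: lin_ext_single)

lemma lin_ext_add: "lin_ext g (x + y) = lin_ext g x + lin_ext g y"
proof (rule poly_mapping_eqI)
  fix w
  define S where "S = Poly_Mapping.keys x \<union> Poly_Mapping.keys y"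
  have fS: "finite S" by (simp add: S_def)
  have k: "Poly_Mapping.keys (x+y) \<subseteq> S" using keys_add[of x y] by (auto simp: S_def)
  show "lk (lin_ext g (x + y)) w = lk (lin_ext g x + lin_ext g y) w"
    by (simp add: lookup_add lookup_lin_ext_sup[OF fS k] lookup_lin_ext_sup[OF fS, of x]
        lookup_lin_ext_sup[OF fS, of y] S_def distrib_right sum.distrib)
qed

lemma lin_ext_zero[simp]: "lin_ext g 0 = 0"
  by (simp add: lin_ext_def)

lemma lin_ext_sum: "lin_ext g (\<Sum>i\<in>I. f i) = (\<Sum>i\<in>I. lin_ext g (f i))"
  by (induction I rule: infinite_finite_induct) (simp_all add: lin_ext_add)

lemma lin_ext_smult: "lin_ext g (pm_smult c x) = pm_smult c (lin_ext g x)"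
proof (rule poly_mapping_eqI)
  fix w
  have k: "Poly_Mapping.keys (pm_smult c x) \<subseteq> Poly_Mapping.keys x" by (auto simp: in_keys_iff)
  show "lk (lin_ext g (pm_smult c x)) w = lk (pm_smult c (lin_ext g x)) w"
    by (subst lookup_lin_ext_sup[OF _ k]) (simp_all add: lookup_lin_ext sum_distrib_left mult.assoc)
qed

lemma lin_ext_minus: "lin_ext g (x - y) = lin_ext g x - lin_ext g y"
  by (metis add_diff_cancel lin_ext_add diff_add_cancel)

lemma lin_ext_swap:
  "lin_ext (\<lambda>u. lin_ext (\<lambda>c. F u c) y) z = lin_ext (\<lambda>c. lin_ext (\<lambda>u. F u c) z) y"
  by (rule poly_mapping_eqI)
     (simp add: lookup_lin_ext sum_distrib_left sum_distrib_right mult_ac sum.swap[of _ "Poly_Mapping.keys z"])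

lemma bilin_ext_lin: "bilin_ext m x y = lin_ext (\<lambda>b. lin_ext (m b) y) x"
  by (rule poly_mapping_eqI)
     (simp add: bilin_ext_def lin_ext_def lookup_sum sum_distrib_left mult_ac)

lemma lookup_bilin_ext_sup:
  assumes "finite S" "Poly_Mapping.keys x \<subseteq> S" "finite S'" "Poly_Mapping.keys y \<subseteq> S'"
  shows "lk (bilin_ext m x y) w = (\<Sum>b\<in>S. \<Sum>c\<in>S'. lk x b * lk y c * lk (m b c) w)"
  by (simp add: bilin_ext_lin lookup_lin_ext_sup[OF assms(1,2)] lookup_lin_ext_sup[OF assms(3,4)]
      sum_distrib_left mult_ac)


lemma std_map_le: "finite X \<Longrightarrow> a \<le> b \<Longrightarrow> std_map X a \<le> std_map X b"
  unfolding std_map_def by (rule card_mono) auto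

lemma std_map_less: "finite X \<Longrightarrow> b \<in> X \<Longrightarrow> a < b \<Longrightarrow> std_map X a < std_map X b"
proof -
  assume f: "finite X" and b: "b \<in> X" and ab: "a < b"
  have "{x \<in> X. x \<le> a} \<subseteq> {x \<in> X. x \<le> b}" using ab by auto
  moreover have "b \<in> {x \<in> X. x \<le> b} - {x \<in> X. x \<le> a}" using b ab by auto
  ultimately have "{x \<in> X. x \<le> a} \<subset> {x \<in> X. x \<le> b}" by blast
  then show ?thesis unfolding std_map_def using f by (intro psubset_card_mono) auto
qed

lemma std_map_less_iff: "finite X \<Longrightarrow> a \<in> X \<Longrightarrow> b \<in> X \<Longrightarrow> std_map X a < std_map X b \<longleftrightarrow> a < b"
  by (metis std_map_less std_map_le not_less)

lemma std_map_le_iff: "finite X \<Longrightarrow> a \<in> X \<Longrightarrow> b \<in> X \<Longrightarrow> std_map X a \<le> std_map X b \<longleftrightarrow> a \<le> b"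
  by (metis std_map_less std_map_le not_less)

lemma std_map_eq_iff: "finite X \<Longrightarrow> a \<in> X \<Longrightarrow> b \<in> X \<Longrightarrow> std_map X a = std_map X b \<longleftrightarrow> a = b"
  by (metis std_map_le_iff order.antisym order_refl)

lemma std_map_inj: "finite X \<Longrightarrow> inj_on (std_map X) X"
  by (auto simp: inj_on_def std_map_eq_iff)

lemma std_map_range: "finite X \<Longrightarrow> a \<in> X \<Longrightarrow> std_map X a \<in> {1..card X}"
proof -
  assume f: "finite X" and a: "a \<in> X"
  have "{x \<in> X. x \<le> a} \<noteq> {}" using a by auto
  then have "1 \<le> std_map X a" unfolding std_map_def using f by (simp add: Suc_leI card_gt_0_iff)
  moreover have "std_map X a \<le> card X" unfolding std_map_def using f by (intro card_mono) auto
  ultimately show ?thesis by simp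
qed

lemma std_map_image: "finite X \<Longrightarrow> std_map X ` X = {1..card X}"
proof -
  assume f: "finite X"
  have s: "std_map X ` X \<subseteq> {1..card X}" using std_map_range[OF f] by auto
  have "card (std_map X ` X) = card X" using card_image[OF std_map_inj[OF f]] .
  then show ?thesis using s by (metis card_atLeastAtMost card_subset_eq diff_Suc_1 finite_atLeastAtMost)
qed

lemma std_map_interval: "x \<in> {Suc k..m} \<Longrightarrow> std_map {Suc k..m} x = x - k"
proof -
  assume "x \<in> {Suc k..m}"
  then have "{y \<in> {Suc k..m}. y \<le> x} = {Suc k..x}" by auto
  then show ?thesis by (simp add: std_map_def)
qed

lemma std_map_interval1: "x \<in> {1..m} \<Longrightarrow> std_map {1..m} x = x"
  using std_map_interval[of x 0 m] by simp

lemma length_pack[simp]: "length (pack w) = length w"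
  by (simp add: pack_def)

lemma nth_pack: "p < length w \<Longrightarrow> pack w ! p = std_map (set w) (w ! p)"
  by (simp add: pack_def)

lemma set_pack: "set (pack w) = {1..card (set w)}"
  by (simp add: pack_def std_map_image)

lemma packed_pack: "packed (pack w)"
  by (auto simp: packed_def set_pack)

lemma packed_set: "packed w \<Longrightarrow> set w = {1..wmax w}"
proof -
  assume "packed w"
  then obtain m where m: "set w = {1..m}" by (auto simp: packed_def)
  show ?thesis
  proof (cases "w = []")
    case True then show ?thesis using m by (simp add: wmax_def)
  next
    case False
    then have "m \<ge> 1" using m by (metis atLeastatMost_empty_iff set_empty not_le less_one)
    have "Max {1..m} = m" using \<open>m \<ge> 1\<close> by (intro Max_eqI) auto
    then show ?thesis using m False by (simp add: wmax_def)
  qed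
qed

lemma packed_iff: "packed w \<longleftrightarrow> set w = {1..wmax w}"
  using packed_set packed_def by blast

lemma pack_packed: "packed w \<Longrightarrow> pack w = w"
proof -
  assume "packed w"
  then have "\<forall>x\<in>set w. std_map (set w) x = x" using packed_set[of w] std_map_interval1 by metis
  then show ?thesis unfolding pack_def by (intro map_idI) auto
qed

lemma pack_shift: "pack (map (\<lambda>x. x + k) w) = pack w"
proof -
  have "std_map ((\<lambda>x. x + k) ` set w) (x + k) = std_map (set w) x" for x
  proof -
    have "{y \<in> (\<lambda>x. x + k) ` set w. y \<le> x + k} = (\<lambda>x. x + k) ` {y \<in> set w. y \<le> x}" by auto
    then show ?thesis unfolding std_map_def by (simp add: card_image)
  qed
  then show ?thesis by (simp add: pack_def)
qed

lemma wmax_ge: "x \<in> set w \<Longrightarrow> x \<le> wmax w"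
  by (auto simp: wmax_def)

lemma wat_nth: "wat w i = w ! (i - 1)" by (simp add: wat_def)

lemma wat_in_set: "i \<in> {1..length w} \<Longrightarrow> wat w i \<in> set w"
  by (auto simp: wat_def)

lemma packed_wat_pos: "packed w \<Longrightarrow> i \<in> {1..length w} \<Longrightarrow> 1 \<le> wat w i \<and> wat w i \<le> wmax w"
  using wat_in_set[of i w] packed_set[of w] by auto

lemma list_eq_wat: "length u = length v \<Longrightarrow> (\<And>i. i \<in> {1..length u} \<Longrightarrow> wat u i = wat v i) \<Longrightarrow> u = v"
proof (rule nth_equalityI)
  fix i assume l: "length u = length v" and h: "\<And>i. i \<in> {1..length u} \<Longrightarrow> wat u i = wat v i" and i: "i < length u"
  have "Suc i \<in> {1..length u}" using i by simp
  from h[OF this] show "u ! i = v ! i" by (simp add: wat_def)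
qed

lemma filter_wat:
  "length (filter P w) = card {i \<in> {1..length w}. P (wat w i)} \<and>
   (\<forall>i \<in> {i \<in> {1..length w}. P (wat w i)}. wat (filter P w) (std_map {i \<in> {1..length w}. P (wat w i)} i) = wat w i)"
proof (induction w rule: rev_induct)
  case Nil then show ?case by simp
next
  case (snoc a w)
  define n where "n = length w"
  define X where "X = {i \<in> {1..n}. P (wat w i)}"
  have fX: "finite X" by (simp add: X_def)
  have Xn: "X \<subseteq> {1..n}" by (auto simp: X_def)
  have watw: "wat (w @ [a]) i = wat w i" if "i \<in> {1..n}" for i
    using that by (auto simp: wat_def nth_append n_def)
  have wata: "wat (w @ [a]) (Suc n) = a" by (simp add: wat_def n_def)
  define X' where "X' = {i \<in> {1..length (w @ [a])}. P (wat (w @ [a]) i)}"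
  have X'eq: "X' = X \<union> (if P a then {Suc n} else {})"
    by (auto simp: X'_def X_def n_def watw wata le_Suc_eq) (metis atLeastAtMost_iff le_Suc_eq n_def wata watw)+
  have IH1: "length (filter P w) = card X" and IH2: "\<forall>i\<in>X. wat (filter P w) (std_map X i) = wat w i"
    using snoc by (simp_all add: X_def n_def)
  have sm: "std_map X' i = std_map X i" if "i \<in> X" for i
  proof -
    have "{x \<in> X'. x \<le> i} = {x \<in> X. x \<le> i}" using that Xn by (auto simp: X'eq)
    then show ?thesis by (simp add: std_map_def)
  qed
  show ?case
  proof (cases "P a")
    case True
    have "Suc n \<notin> X" using Xn by auto
    then have cX': "card X' = Suc (card X)" using fX True by (simp add: X'eq)
    have smn: "std_map X' (Suc n) = Suc (card X)"
    proof -
      have "{x \<in> X'. x \<le> Suc n} = X'" using Xn by (auto simp: X'eq)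
      then show ?thesis using cX' by (simp add: std_map_def)
    qed
    have "\<forall>i\<in>X'. wat (filter P (w @ [a])) (std_map X' i) = wat (w @ [a]) i"
    proof
      fix i assume i: "i \<in> X'"
      show "wat (filter P (w @ [a])) (std_map X' i) = wat (w @ [a]) i"
      proof (cases "i = Suc n")
        case True then show ?thesis using smn wata \<open>P a\<close> IH1 by (simp add: wat_def nth_append)
      next
        case False
        then have iX: "i \<in> X" using i \<open>P a\<close> by (auto simp: X'eq)
        have r: "std_map X i \<in> {1..card X}" using std_map_range[OF fX iX] .
        have "i \<le> n" using iX Xn by auto
        then show ?thesis using iX sm IH1 IH2 \<open>P a\<close> watw Xn r
          by (auto simp: wat_def nth_append n_def)
      qed
    qed
    then have "length (filter P (w @ [a])) = card X' \<and> (\<forall>i\<in>X'. wat (filter P (w @ [a])) (std_map X' i) = wat (w @ [a]) i)"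
      using cX' IH1 True by simp
    then show ?thesis unfolding X'_def .
  next
    case False
    have "X' = X" by (simp add: X'eq False)
    moreover have "\<forall>i\<in>X. wat (filter P (w @ [a])) (std_map X i) = wat (w @ [a]) i"
      using IH2 False watw Xn by auto
    ultimately have "length (filter P (w @ [a])) = card X' \<and> (\<forall>i\<in>X'. wat (filter P (w @ [a])) (std_map X' i) = wat (w @ [a]) i)"
      using IH1 False by simp
    then show ?thesis unfolding X'_def .
  qed
qed


definition coef :: "'k::field \<Rightarrow> 'k \<Rightarrow> 'k \<Rightarrow> nat set set \<Rightarrow> nat list \<Rightarrow> 'k" where
  "coef q1 q2 q3 T f = q1 ^ ell1 T f * q2 ^ ell2 T f * q3 ^ ell3 T f"

lemma finite_Tpartitions: "finite (Tpartitions T)"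
proof -
  have "Tpartitions T \<subseteq> {w. set w \<subseteq> {0..tdeg T} \<and> length w = tdeg T}"
  proof
    fix w assume w: "w \<in> Tpartitions T"
    then have p: "packed w" and l: "length w = tdeg T" by (auto simp: Tpartitions_def)
    have "wmax w = card (set w)" using packed_set[OF p] by (metis card_atLeastAtMost diff_Suc_1)
    also have "\<dots> \<le> length w" by (rule card_length)
    finally show "w \<in> {w. set w \<subseteq> {0..tdeg T} \<and> length w = tdeg T}"
      using packed_set[OF p] l by auto
  qed
  moreover have "finite {w. set w \<subseteq> {0..tdeg T} \<and> length w = tdeg T}"
    by (rule finite_lists_length_eq) simp
  ultimately show ?thesis by (rule finite_subset)
qed

lemma lookup_gamma: "lk (gamma_basis q1 q2 q3 T) w = (if w \<in> Tpartitions T then coef q1 q2 q3 T w else 0)"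
  unfolding gamma_basis_def coef_def lookup_sum
  by (simp add: lookup_single when_def finite_Tpartitions sum.delta)

lemma keys_gamma: "Poly_Mapping.keys (gamma_basis q1 q2 q3 T) \<subseteq> Tpartitions T"
  by (auto simp: in_keys_iff lookup_gamma split: if_splits)

lemma Gamma_single: "Gamma q1 q2 q3 (Poly_Mapping.single T 1) = gamma_basis q1 q2 q3 T"
  by (simp add: Gamma_def)

lemma top_facts:
  assumes "T \<in> topologies n"
  shows "T \<subseteq> Pow {1..n}" "{} \<in> T" "{1..n} \<in> T" "\<And>A B. A \<in> T \<Longrightarrow> B \<in> T \<Longrightarrow> A \<union> B \<in> T"
    "\<And>A B. A \<in> T \<Longrightarrow> B \<in> T \<Longrightarrow> A \<inter> B \<in> T"
  using assms by (auto simp: topologies_def is_topology_def)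

lemma top_Union: "T \<in> topologies n \<Longrightarrow> \<Union>T = {1..n}"
  using top_facts[of T n] by blast

lemma tdeg_top: "T \<in> topologies n \<Longrightarrow> tdeg T = n"
  by (simp add: tdeg_def top_Union)

lemma finite_top: "T \<in> topologies n \<Longrightarrow> finite T"
  using top_facts(1) by (metis finite_Pow_iff finite_atLeastAtMost finite_subset)

lemma top_Union_closed: assumes T: "T \<in> topologies n" shows "finite F \<Longrightarrow> F \<subseteq> T \<Longrightarrow> \<Union>F \<in> T"
proof (induction F rule: finite_induct)
  case empty then show ?case using top_facts(2)[OF T] by simp
next
  case (insert x F) then show ?case using top_facts(4)[OF T] by simp
qed

lemma top_Inter_closed: assumes T: "T \<in> topologies n" shows "finite F \<Longrightarrow> F \<noteq> {} \<Longrightarrow> F \<subseteq> T \<Longrightarrow> \<Inter>F \<in> T"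
proof (induction F rule: finite_ne_induct)
  case (singleton x) then show ?case by simp
next
  case (insert x F) then show ?case using top_facts(5)[OF T] by simp
qed

lemma upset_open:
  assumes T: "T \<in> topologies n" and V: "V \<subseteq> {1..n}"
    and up: "\<And>i j. i \<in> V \<Longrightarrow> j \<in> {1..n} \<Longrightarrow> tleq T i j \<Longrightarrow> j \<in> V"
  shows "V \<in> T"
proof -
  define N where "N i = \<Inter>{U \<in> T. i \<in> U}" for i
  have fT: "finite T" using finite_top[OF T] .
  have NT: "N i \<in> T" if "i \<in> V" for i
    unfolding N_def using that V top_facts(3)[OF T]
    by (intro top_Inter_closed[OF T]) (auto intro: finite_subset[OF _ fT])
  have Ni: "i \<in> N i" for i by (auto simp: N_def)
  have NV: "N i \<subseteq> V" if "i \<in> V" for i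
  proof
    fix j assume j: "j \<in> N i"
    have "j \<in> {1..n}" using j top_facts(3)[OF T] that V by (auto simp: N_def)
    moreover have "tleq T i j" using j by (auto simp: N_def tleq_def)
    ultimately show "j \<in> V" using up that by blast
  qed
  have "V = \<Union>(N ` V)" using Ni NV by blast
  also have "\<dots> \<in> T" using NT V by (intro top_Union_closed[OF T]) (auto intro: finite_subset)
  finally show ?thesis .
qed

definition E1 :: "(nat \<Rightarrow> nat \<Rightarrow> bool) \<Rightarrow> (nat \<Rightarrow> nat) \<Rightarrow> nat set \<Rightarrow> (nat \<times> nat) set" where
  "E1 le F X = {(i, j). i \<in> X \<and> j \<in> X \<and> le i j \<and> \<not> le j i \<and> i < j \<and> F i = F j}"
definition E2 :: "(nat \<Rightarrow> nat \<Rightarrow> bool) \<Rightarrow> (nat \<Rightarrow> nat) \<Rightarrow> nat set \<Rightarrow> (nat \<times> nat) set" where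
  "E2 le F X = {(i, j). i \<in> X \<and> j \<in> X \<and> le i j \<and> \<not> le j i \<and> i > j \<and> F i = F j}"
definition E3 :: "(nat \<Rightarrow> nat \<Rightarrow> bool) \<Rightarrow> (nat \<Rightarrow> nat) \<Rightarrow> nat set \<Rightarrow> (nat \<times> nat \<times> nat) set" where
  "E3 le F X = {(i, j, k). i \<in> X \<and> j \<in> X \<and> k \<in> X \<and> i < j \<and> j < k \<and> le i k \<and> le k i \<and>
     \<not> (le i j \<and> le j i) \<and> \<not> (le j k \<and> le k j) \<and> F i = F j \<and> F j = F k}"

lemma ell1_E: "ell1 T f = card (E1 (tleq T) (wat f) {1..tdeg T})"
  unfolding ell1_def E1_def tless_def by (rule arg_cong[where f=card]) auto
lemma ell2_E: "ell2 T f = card (E2 (tleq T) (wat f) {1..tdeg T})"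
  unfolding ell2_def E2_def tless_def by (rule arg_cong[where f=card]) auto
lemma ell3_E: "ell3 T f = card (E3 (tleq T) (wat f) {1..tdeg T})"
  unfolding ell3_def E3_def tsim_def by (rule arg_cong[where f=card]) auto

lemma finite_E: "finite X \<Longrightarrow> finite (E1 le F X)" "finite X \<Longrightarrow> finite (E2 le F X)" "finite X \<Longrightarrow> finite (E3 le F X)"
proof -
  assume f: "finite X"
  show "finite (E1 le F X)" by (rule finite_subset[of _ "X \<times> X"]) (auto simp: E1_def f)
  show "finite (E2 le F X)" by (rule finite_subset[of _ "X \<times> X"]) (auto simp: E2_def f)
  show "finite (E3 le F X)" by (rule finite_subset[of _ "X \<times> X \<times> X"]) (auto simp: E3_def f)
qed

locale relabel =
  fixes \<sigma> :: "nat \<Rightarrow> nat" and X Y :: "nat set" and le le' :: "nat \<Rightarrow> nat \<Rightarrow> bool" and F F' :: "nat \<Rightarrow> nat"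
  assumes mono: "\<And>a b. a \<in> X \<Longrightarrow> b \<in> X \<Longrightarrow> \<sigma> a < \<sigma> b \<longleftrightarrow> a < b"
    and img: "\<sigma> ` X = Y"
    and rel: "\<And>a b. a \<in> X \<Longrightarrow> b \<in> X \<Longrightarrow> le' (\<sigma> a) (\<sigma> b) = le a b"
    and val: "\<And>a b. a \<in> X \<Longrightarrow> b \<in> X \<Longrightarrow> F' (\<sigma> a) = F' (\<sigma> b) \<longleftrightarrow> F a = F b"
begin

lemma inj: "inj_on \<sigma> X"
proof (rule inj_onI)
  fix a b assume a: "a \<in> X" and b: "b \<in> X" and e: "\<sigma> a = \<sigma> b"
  show "a = b"
  proof (rule ccontr)
    assume "a \<noteq> b"
    then have "a < b \<or> b < a" by arith
    then show False using mono[OF a b] mono[OF b a] e by auto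
  qed
qed

lemma E1: "card (E1 le' F' Y) = card (E1 le F X)"
proof -
  have "E1 le' F' Y = (\<lambda>(i, j). (\<sigma> i, \<sigma> j)) ` E1 le F X"
  proof
    show "E1 le' F' Y \<subseteq> (\<lambda>(i, j). (\<sigma> i, \<sigma> j)) ` E1 le F X"
    proof
      fix p assume p: "p \<in> E1 le' F' Y"
      then obtain i j where ij: "p = (i, j)" "i \<in> Y" "j \<in> Y" "le' i j" "\<not> le' j i" "i < j" "F' i = F' j"
        by (auto simp: E1_def)
      obtain a b where ab: "a \<in> X" "b \<in> X" "i = \<sigma> a" "j = \<sigma> b" using ij(2,3) img by blast
      have "(a, b) \<in> E1 le F X" using ij ab by (simp add: E1_def rel val mono)
      then show "p \<in> (\<lambda>(i, j). (\<sigma> i, \<sigma> j)) ` E1 le F X" using ij ab by force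
    qed
    show "(\<lambda>(i, j). (\<sigma> i, \<sigma> j)) ` E1 le F X \<subseteq> E1 le' F' Y"
      using img by (auto simp: E1_def rel val mono)
  qed
  moreover have "inj_on (\<lambda>(i, j). (\<sigma> i, \<sigma> j)) (E1 le F X)"
    using inj by (auto simp: inj_on_def E1_def)
  ultimately show ?thesis by (simp add: card_image)
qed

lemma E2: "card (E2 le' F' Y) = card (E2 le F X)"
proof -
  have "E2 le' F' Y = (\<lambda>(i, j). (\<sigma> i, \<sigma> j)) ` E2 le F X"
  proof
    show "E2 le' F' Y \<subseteq> (\<lambda>(i, j). (\<sigma> i, \<sigma> j)) ` E2 le F X"
    proof
      fix p assume p: "p \<in> E2 le' F' Y"
      then obtain i j where ij: "p = (i, j)" "i \<in> Y" "j \<in> Y" "le' i j" "\<not> le' j i" "i > j" "F' i = F' j"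
        by (auto simp: E2_def)
      obtain a b where ab: "a \<in> X" "b \<in> X" "i = \<sigma> a" "j = \<sigma> b" using ij(2,3) img by blast
      have "(a, b) \<in> E2 le F X" using ij ab by (simp add: E2_def rel val mono)
      then show "p \<in> (\<lambda>(i, j). (\<sigma> i, \<sigma> j)) ` E2 le F X" using ij ab by force
    qed
    show "(\<lambda>(i, j). (\<sigma> i, \<sigma> j)) ` E2 le F X \<subseteq> E2 le' F' Y"
      using img by (auto simp: E2_def rel val mono)
  qed
  moreover have "inj_on (\<lambda>(i, j). (\<sigma> i, \<sigma> j)) (E2 le F X)"
    using inj by (auto simp: inj_on_def E2_def)
  ultimately show ?thesis by (simp add: card_image)
qed

lemma E3: "card (E3 le' F' Y) = card (E3 le F X)"
proof -
  have "E3 le' F' Y = (\<lambda>(i, j, k). (\<sigma> i, \<sigma> j, \<sigma> k)) ` E3 le F X"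
  proof
    show "E3 le' F' Y \<subseteq> (\<lambda>(i, j, k). (\<sigma> i, \<sigma> j, \<sigma> k)) ` E3 le F X"
    proof
      fix p assume p: "p \<in> E3 le' F' Y"
      then obtain i j k where ij: "p = (i, j, k)" "i \<in> Y" "j \<in> Y" "k \<in> Y" "i < j" "j < k" "le' i k" "le' k i"
         "\<not> (le' i j \<and> le' j i)" "\<not> (le' j k \<and> le' k j)" "F' i = F' j" "F' j = F' k"
        by (auto simp: E3_def)
      obtain a b c where ab: "a \<in> X" "b \<in> X" "c \<in> X" "i = \<sigma> a" "j = \<sigma> b" "k = \<sigma> c"
        using ij(2,3,4) img by blast
      have "(a, b, c) \<in> E3 le F X" using ij ab by (simp add: E3_def rel val mono)
      then show "p \<in> (\<lambda>(i, j, k). (\<sigma> i, \<sigma> j, \<sigma> k)) ` E3 le F X" using ij ab by force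
    qed
    show "(\<lambda>(i, j, k). (\<sigma> i, \<sigma> j, \<sigma> k)) ` E3 le F X \<subseteq> E3 le' F' Y"
    proof
      fix p assume "p \<in> (\<lambda>(i, j, k). (\<sigma> i, \<sigma> j, \<sigma> k)) ` E3 le F X"
      then obtain a b c where "(a, b, c) \<in> E3 le F X" "p = (\<sigma> a, \<sigma> b, \<sigma> c)" by auto
      then show "p \<in> E3 le' F' Y" using img by (simp add: E3_def rel val mono) blast
    qed
  qed
  moreover have "inj_on (\<lambda>(i, j, k). (\<sigma> i, \<sigma> j, \<sigma> k)) (E3 le F X)"
    using inj by (auto simp: inj_on_def E3_def)
  ultimately show ?thesis by (simp add: card_image)
qed

end


lemma Tpartitions_packed: "w \<in> Tpartitions T \<Longrightarrow> packed w \<and> length w = tdeg T"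
  by (simp add: Tpartitions_def)

lemma keys_Gamma: "Poly_Mapping.keys (Gamma q1 q2 q3 x) \<subseteq> (\<Union>b\<in>Poly_Mapping.keys x. Tpartitions b)"
  unfolding Gamma_def using keys_lin_ext keys_gamma by fastforce

lemma conj1: "Poly_Mapping.keys (Gamma q1 q2 q3 x) \<subseteq> {w. packed w}"
  using keys_Gamma Tpartitions_packed by fastforce

lemma conj2: "Poly_Mapping.keys x \<subseteq> topologies n \<Longrightarrow>
   Poly_Mapping.keys (Gamma q1 q2 q3 x) \<subseteq> {w. packed w \<and> length w = n}"
  using keys_Gamma[of q1 q2 q3 x] Tpartitions_packed tdeg_top by fastforce

lemma tdeg_empty: "tdeg {{}} = 0" by (simp add: tdeg_def)

lemma packed_Nil: "packed []" unfolding packed_def by (rule exI[of _ 0]) simp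

lemma Tpartitions_empty: "Tpartitions {{}} = {[]}"
  by (auto simp: Tpartitions_def tdeg_empty packed_Nil)

lemma coef_deg0: "tdeg T = 0 \<Longrightarrow> coef q1 q2 q3 T w = 1"
proof -
  have "E1 le F {} = {}" "E2 le F {} = {}" "E3 le F {} = {}" for le F by (auto simp: E1_def E2_def E3_def)
  then show "tdeg T = 0 \<Longrightarrow> coef q1 q2 q3 T w = 1" by (simp add: coef_def ell1_E ell2_E ell3_E)
qed

lemma conj3: "Gamma q1 q2 q3 HT_unit = WQ_unit"
  unfolding HT_unit_def WQ_unit_def Gamma_single
  by (rule poly_mapping_eqI) (simp add: lookup_gamma Tpartitions_empty coef_deg0 tdeg_empty lookup_single when_def)

lemma topologies0: "T \<in> topologies 0 \<Longrightarrow> T = {{}}"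
proof -
  assume T: "T \<in> topologies 0"
  have "T \<subseteq> {{}}" using top_facts(1)[OF T] by auto
  then show ?thesis using top_facts(2)[OF T] by blast
qed

lemma gamma_empty_word:
  assumes "T \<in> all_topologies"
  shows "lk (gamma_basis q1 q2 q3 T) [] = (if T = {{}} then 1 else 0)"
proof -
  obtain n where T: "T \<in> topologies n" using assms by (auto simp: all_topologies_def)
  have "[] \<in> Tpartitions T \<longleftrightarrow> n = 0"
    using T by (auto simp: Tpartitions_def packed_def tdeg_top)
  moreover have "n = 0 \<longleftrightarrow> T = {{}}"
  proof
    assume "n = 0" then show "T = {{}}" using T topologies0 by blast
  next
    assume "T = {{}}" then have "{1..n} \<in> {{}}" using top_facts(3)[OF T] by simp
    then show "n = 0" by simp
  qed
  ultimately show ?thesis using T by (auto simp: lookup_gamma coef_deg0 tdeg_top)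
qed

lemma conj6:
  assumes "Poly_Mapping.keys x \<subseteq> all_topologies"
  shows "WQ_counit (Gamma q1 q2 q3 x) = HT_counit x"
proof -
  have "WQ_counit (Gamma q1 q2 q3 x) = (\<Sum>b\<in>Poly_Mapping.keys x. lk x b * (if b = {{}} then 1 else 0))"
    unfolding WQ_counit_def Gamma_def lookup_lin_ext
  proof (intro sum.cong refl)
    fix b assume "b \<in> Poly_Mapping.keys x"
    then have "b \<in> all_topologies" using assms by blast
    then show "lk x b * lk (gamma_basis q1 q2 q3 b) [] = lk x b * (if b = {{}} then 1 else 0)"
      by (simp add: gamma_empty_word)
  qed
  also have "\<dots> = (\<Sum>b\<in>Poly_Mapping.keys x. if b = {{}} then lk x b else 0)"
    by (intro sum.cong) auto
  also have "\<dots> = lk x {{}}"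
    by (subst sum.delta) (auto simp: in_keys_iff)
  finally show ?thesis by (simp add: HT_counit_def)
qed

lemma length_wq_j[simp]: "length (wq_j f) = length f" by (simp add: wq_j_def)

lemma wat_wq_j: "i \<in> {1..length f} \<Longrightarrow> wat (wq_j f) i = wmax f + 1 - wat f i"
proof -
  assume "i \<in> {1..length f}"
  then have "i - 1 < length f" by auto
  then show ?thesis by (simp add: wq_j_def wat_def)
qed

lemma set_wq_j: "packed f \<Longrightarrow> set (wq_j f) = set f"
proof -
  assume p: "packed f"
  have "set (wq_j f) = (\<lambda>x. wmax f + 1 - x) ` {1..wmax f}" using packed_set[OF p] by (simp add: wq_j_def)
  also have "\<dots> = {1..wmax f}"
  proof
    show "(\<lambda>x. wmax f + 1 - x) ` {1..wmax f} \<subseteq> {1..wmax f}" by auto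
    show "{1..wmax f} \<subseteq> (\<lambda>x. wmax f + 1 - x) ` {1..wmax f}"
    proof
      fix y assume "y \<in> {1..wmax f}"
      then show "y \<in> (\<lambda>x. wmax f + 1 - x) ` {1..wmax f}" by (intro image_eqI[of _ _ "wmax f + 1 - y"]) auto
    qed
  qed
  finally show ?thesis using packed_set[OF p] by simp
qed

lemma wmax_eq_set: "set f = set g \<Longrightarrow> wmax f = wmax g"
  by (auto simp: wmax_def)

lemma packed_wq_j: "packed f \<Longrightarrow> packed (wq_j f)"
  by (metis packed_iff set_wq_j wmax_eq_set)

lemma wq_j_wq_j: "packed f \<Longrightarrow> wq_j (wq_j f) = f"
proof -
  assume p: "packed f"
  have m: "wmax (wq_j f) = wmax f" using set_wq_j[OF p] wmax_eq_set by blast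
  have "\<forall>x\<in>set f. wmax f + 1 - (wmax f + 1 - x) = x" using packed_set[OF p] by auto
  then show ?thesis unfolding wq_j_def[of "wq_j f"] m by (simp add: wq_j_def map_idI)
qed

lemma tdeg_iota: "T \<in> topologies n \<Longrightarrow> tdeg (topo_iota T) = n"
proof -
  assume T: "T \<in> topologies n"
  have "\<Union>(topo_iota T) = {1..n}"
    using top_facts(2)[OF T] by (auto simp: topo_iota_def tdeg_top[OF T])
  then show ?thesis by (simp add: tdeg_def)
qed

lemma tleq_iota: "T \<in> topologies n \<Longrightarrow> i \<in> {1..n} \<Longrightarrow> j \<in> {1..n} \<Longrightarrow> tleq (topo_iota T) i j \<longleftrightarrow> tleq T j i"
proof -
  assume T: "T \<in> topologies n" and i: "i \<in> {1..n}" and j: "j \<in> {1..n}"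
  have "tleq (topo_iota T) i j \<longleftrightarrow> (\<forall>U\<in>T. i \<in> {1..n} - U \<longrightarrow> j \<in> {1..n} - U)"
    unfolding tleq_def topo_iota_def tdeg_top[OF T] by blast
  also have "\<dots> \<longleftrightarrow> tleq T j i" unfolding tleq_def using i j by blast
  finally show ?thesis .
qed

lemma iota_part:
  assumes T: "T \<in> topologies n" and f: "f \<in> Tpartitions T"
  shows "wq_j f \<in> Tpartitions (topo_iota T)"
proof -
  have p: "packed f" and l: "length f = n" using f Tpartitions_packed tdeg_top[OF T] by auto
  have mono: "\<And>i j. i \<in> {1..n} \<Longrightarrow> j \<in> {1..n} \<Longrightarrow> tleq T i j \<Longrightarrow> wat f i \<le> wat f j"
    using f by (auto simp: Tpartitions_def tdeg_top[OF T])
  show ?thesis unfolding Tpartitions_def tdeg_iota[OF T]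
    using packed_wq_j[OF p] l mono by (auto simp: wat_wq_j tleq_iota[OF T] diff_le_mono2)
qed

lemma iota_part':
  assumes T: "T \<in> topologies n" and g: "g \<in> Tpartitions (topo_iota T)"
  shows "wq_j g \<in> Tpartitions T"
proof -
  have p: "packed g" and l: "length g = n" using g Tpartitions_packed tdeg_iota[OF T] by auto
  have mono: "\<And>i j. i \<in> {1..n} \<Longrightarrow> j \<in> {1..n} \<Longrightarrow> tleq T j i \<Longrightarrow> wat g i \<le> wat g j"
    using g by (auto simp: Tpartitions_def tdeg_iota[OF T] tleq_iota[OF T])
  show ?thesis unfolding Tpartitions_def tdeg_top[OF T]
    using packed_wq_j[OF p] l mono by (auto simp: wat_wq_j diff_le_mono2)
qed

lemma coef_iota:
  assumes T: "T \<in> topologies n" and f: "f \<in> Tpartitions T"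
  shows "coef q1 q2 q3 (topo_iota T) (wq_j f) = coef q2 q1 q3 T f"
proof -
  have p: "packed f" and l: "length f = n" using f Tpartitions_packed tdeg_top[OF T] by auto
  have veq: "wat (wq_j f) i = wat (wq_j f) j \<longleftrightarrow> wat f i = wat f j" if "i \<in> {1..n}" "j \<in> {1..n}" for i j
    using that packed_wat_pos[OF p, of i] packed_wat_pos[OF p, of j] l by (auto simp: wat_wq_j)
  have e1: "E1 (tleq (topo_iota T)) (wat (wq_j f)) {1..n} = (\<lambda>(a, b). (b, a)) ` E2 (tleq T) (wat f) {1..n}"
  proof
    show "E1 (tleq (topo_iota T)) (wat (wq_j f)) {1..n} \<subseteq> (\<lambda>(a, b). (b, a)) ` E2 (tleq T) (wat f) {1..n}"
      by (auto simp: E1_def E2_def tleq_iota[OF T] veq image_iff)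
    show "(\<lambda>(a, b). (b, a)) ` E2 (tleq T) (wat f) {1..n} \<subseteq> E1 (tleq (topo_iota T)) (wat (wq_j f)) {1..n}"
      by (auto simp: E1_def E2_def tleq_iota[OF T] veq)
  qed
  have e2: "E2 (tleq (topo_iota T)) (wat (wq_j f)) {1..n} = (\<lambda>(a, b). (b, a)) ` E1 (tleq T) (wat f) {1..n}"
  proof
    show "E2 (tleq (topo_iota T)) (wat (wq_j f)) {1..n} \<subseteq> (\<lambda>(a, b). (b, a)) ` E1 (tleq T) (wat f) {1..n}"
      by (auto simp: E1_def E2_def tleq_iota[OF T] veq image_iff)
    show "(\<lambda>(a, b). (b, a)) ` E1 (tleq T) (wat f) {1..n} \<subseteq> E2 (tleq (topo_iota T)) (wat (wq_j f)) {1..n}"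
      by (auto simp: E1_def E2_def tleq_iota[OF T] veq)
  qed
  have e3: "E3 (tleq (topo_iota T)) (wat (wq_j f)) {1..n} = E3 (tleq T) (wat f) {1..n}"
    by (auto simp: E3_def tleq_iota[OF T] veq)
  have inj: "inj_on (\<lambda>(a::nat, b::nat). (b, a)) A" for A by (auto simp: inj_on_def)
  show ?thesis unfolding coef_def ell1_E ell2_E ell3_E tdeg_iota[OF T] tdeg_top[OF T]
    e1 e2 e3 card_image[OF inj] by (simp add: mult_ac)
qed

lemma iota_basis:
  assumes T: "T \<in> topologies n"
  shows "WQ_j (gamma_basis q2 q1 q3 T) = gamma_basis q1 q2 q3 (topo_iota T)"
proof (rule poly_mapping_eqI)
  fix u
  have "lk (WQ_j (gamma_basis q2 q1 q3 T)) u =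
     (\<Sum>f\<in>Tpartitions T. coef q2 q1 q3 T f * (if f = wq_j u \<and> packed u then 1 else 0))"
    unfolding WQ_j_def
    apply (subst lookup_lin_ext_sup[OF finite_Tpartitions keys_gamma])
    apply (intro sum.cong refl)
    apply (auto simp: lookup_gamma lookup_single when_def dest!: Tpartitions_packed)
    apply (metis packed_wq_j wq_j_wq_j)+
    done
  also have "\<dots> = (if u \<in> Tpartitions (topo_iota T) then coef q1 q2 q3 (topo_iota T) u else 0)"
  proof (cases "u \<in> Tpartitions (topo_iota T)")
    case True
    have p: "packed u" using True Tpartitions_packed by blast
    have w: "wq_j u \<in> Tpartitions T" using iota_part'[OF T True] .
    have "coef q2 q1 q3 T (wq_j u) = coef q1 q2 q3 (topo_iota T) u"
      using coef_iota[of T n "wq_j u" q1 q2 q3, OF T w] wq_j_wq_j[OF p] by simp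
    then show ?thesis using True p w by (simp add: sum.delta' finite_Tpartitions if_distrib cong: if_cong)
  next
    case False
    have "f \<in> Tpartitions T \<Longrightarrow> packed u \<Longrightarrow> f \<noteq> wq_j u" for f
      using iota_part[OF T] False by (metis Tpartitions_packed wq_j_wq_j)
    then show ?thesis using False by (intro trans[OF sum.neutral]) auto
  qed
  finally show "lk (WQ_j (gamma_basis q2 q1 q3 T)) u = lk (gamma_basis q1 q2 q3 (topo_iota T)) u"
    by (simp add: lookup_gamma)
qed

lemma conj8:
  assumes "Poly_Mapping.keys x \<subseteq> all_topologies"
  shows "WQ_j (Gamma q2 q1 q3 x) = Gamma q1 q2 q3 (HT_iota x)"
proof -
  have "WQ_j (Gamma q2 q1 q3 x) = lin_ext (\<lambda>b. WQ_j (gamma_basis q2 q1 q3 b)) x"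
    unfolding WQ_j_def Gamma_def lin_ext_comp ..
  also have "\<dots> = lin_ext (\<lambda>b. gamma_basis q1 q2 q3 (topo_iota b)) x"
    using assms by (intro lin_ext_cong) (auto simp: all_topologies_def iota_basis)
  also have "\<dots> = Gamma q1 q2 q3 (HT_iota x)"
    unfolding HT_iota_def Gamma_def lin_ext_comp by simp
  finally show ?thesis .
qed


lemma E_split_rel:
  assumes fA: "finite A" and fB: "finite B" and d: "A \<inter> B = {}"
    and c: "\<And>a b. a \<in> A \<Longrightarrow> b \<in> B \<Longrightarrow> \<not> le a b \<and> \<not> le b a \<and> a < b"
  shows "card (E1 le F (A \<union> B)) = card (E1 le F A) + card (E1 le F B)"
    "card (E2 le F (A \<union> B)) = card (E2 le F A) + card (E2 le F B)"
    "card (E3 le F (A \<union> B)) = card (E3 le F A) + card (E3 le F B)"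
proof -
  have "E1 le F (A \<union> B) = E1 le F A \<union> E1 le F B" using c by (auto simp: E1_def)
  moreover have "E1 le F A \<inter> E1 le F B = {}" using d by (auto simp: E1_def)
  ultimately show "card (E1 le F (A \<union> B)) = card (E1 le F A) + card (E1 le F B)"
    using finite_E fA fB by (simp add: card_Un_disjoint)
next
  have "E2 le F (A \<union> B) = E2 le F A \<union> E2 le F B" using c by (auto simp: E2_def)
  moreover have "E2 le F A \<inter> E2 le F B = {}" using d by (auto simp: E2_def)
  ultimately show "card (E2 le F (A \<union> B)) = card (E2 le F A) + card (E2 le F B)"
    using finite_E fA fB by (simp add: card_Un_disjoint)
next
  have "E3 le F (A \<union> B) \<subseteq> E3 le F A \<union> E3 le F B"
  proof
    fix t assume t: "t \<in> E3 le F (A \<union> B)"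
    then obtain i j k where ijk: "t = (i, j, k)" "i \<in> A \<union> B" "j \<in> A \<union> B" "k \<in> A \<union> B" "i < j" "j < k" "le i k" "le k i"
      by (auto simp: E3_def)
    have "(i \<in> A \<and> j \<in> A \<and> k \<in> A) \<or> (i \<in> B \<and> j \<in> B \<and> k \<in> B)"
      using ijk c by (metis UnE order.asym order.strict_trans)
    then show "t \<in> E3 le F A \<union> E3 le F B" using t ijk by (auto simp: E3_def)
  qed
  then have "E3 le F (A \<union> B) = E3 le F A \<union> E3 le F B" by (auto simp: E3_def)
  moreover have "E3 le F A \<inter> E3 le F B = {}" using d by (auto simp: E3_def)
  ultimately show "card (E3 le F (A \<union> B)) = card (E3 le F A) + card (E3 le F B)"
    using finite_E fA fB by (simp add: card_Un_disjoint)
qed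

lemma E_split_val:
  assumes fA: "finite A" and fB: "finite B" and d: "A \<inter> B = {}"
    and c: "\<And>a b. a \<in> A \<Longrightarrow> b \<in> B \<Longrightarrow> F a \<noteq> F b"
  shows "card (E1 le F (A \<union> B)) = card (E1 le F A) + card (E1 le F B)"
    "card (E2 le F (A \<union> B)) = card (E2 le F A) + card (E2 le F B)"
    "card (E3 le F (A \<union> B)) = card (E3 le F A) + card (E3 le F B)"
proof -
  have "E1 le F (A \<union> B) = E1 le F A \<union> E1 le F B" using c by (auto simp: E1_def) (metis)+
  moreover have "E1 le F A \<inter> E1 le F B = {}" using d by (auto simp: E1_def)
  ultimately show "card (E1 le F (A \<union> B)) = card (E1 le F A) + card (E1 le F B)"
    using finite_E fA fB by (simp add: card_Un_disjoint)
next
  have "E2 le F (A \<union> B) = E2 le F A \<union> E2 le F B" using c by (auto simp: E2_def) (metis)+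
  moreover have "E2 le F A \<inter> E2 le F B = {}" using d by (auto simp: E2_def)
  ultimately show "card (E2 le F (A \<union> B)) = card (E2 le F A) + card (E2 le F B)"
    using finite_E fA fB by (simp add: card_Un_disjoint)
next
  have "E3 le F (A \<union> B) \<subseteq> E3 le F A \<union> E3 le F B"
  proof
    fix t assume t: "t \<in> E3 le F (A \<union> B)"
    then obtain i j k where ijk: "t = (i, j, k)" "i \<in> A \<union> B" "j \<in> A \<union> B" "k \<in> A \<union> B" "F i = F j" "F j = F k"
      by (auto simp: E3_def)
    have "(i \<in> A \<and> j \<in> A \<and> k \<in> A) \<or> (i \<in> B \<and> j \<in> B \<and> k \<in> B)"
      using ijk c by (metis UnE)
    then show "t \<in> E3 le F A \<union> E3 le F B" using t ijk by (auto simp: E3_def)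
  qed
  then have "E3 le F (A \<union> B) = E3 le F A \<union> E3 le F B" by (auto simp: E3_def)
  moreover have "E3 le F A \<inter> E3 le F B = {}" using d by (auto simp: E3_def)
  ultimately show "card (E3 le F (A \<union> B)) = card (E3 le F A) + card (E3 le F B)"
    using finite_E fA fB by (simp add: card_Un_disjoint)
qed

lemma finite_packed_len: "finite {w. packed w \<and> length w = m}"
proof -
  have "{w. packed w \<and> length w = m} \<subseteq> {w. set w \<subseteq> {0..m} \<and> length w = m}"
  proof
    fix w assume w: "w \<in> {w. packed w \<and> length w = m}"
    then have p: "packed w" and l: "length w = m" by auto
    have "wmax w = card (set w)" using packed_set[OF p] by (metis card_atLeastAtMost diff_Suc_1)
    also have "\<dots> \<le> length w" by (rule card_length)
    finally show "w \<in> {w. set w \<subseteq> {0..m} \<and> length w = m}"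
      using packed_set[OF p] l by auto
  qed
  moreover have "finite {w. set w \<subseteq> {0..m} \<and> length w = m}"
    by (rule finite_lists_length_eq) simp
  ultimately show ?thesis by (rule finite_subset)
qed

lemma lookup_wq_prod: "lk (wq_prod f g :: nat list \<Rightarrow>\<^sub>0 'k::field) w =
  (if packed w \<and> length w = length f + length g \<and> pack (take (length f) w) = f \<and> pack (drop (length f) w) = g then 1 else 0)"
proof -
  have fin: "finite {w. packed w \<and> length w = length f + length g \<and>
        pack (take (length f) w) = f \<and> pack (drop (length f) w) = g}"
    by (rule finite_subset[OF _ finite_packed_len[of "length f + length g"]]) auto
  show ?thesis unfolding wq_prod_def lookup_sum
    by (simp add: lookup_single when_def sum.delta[OF fin])
qed

lemma wat_pack: "i \<in> {1..length u} \<Longrightarrow> wat (pack u) i = std_map (set u) (wat u i)"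
proof -
  assume "i \<in> {1..length u}" then have "i - 1 < length u" by auto
  then show ?thesis by (simp add: wat_def nth_pack)
qed

lemma wat_pack_le: "i \<in> {1..length u} \<Longrightarrow> j \<in> {1..length u} \<Longrightarrow> wat (pack u) i \<le> wat (pack u) j \<longleftrightarrow> wat u i \<le> wat u j"
  by (simp add: wat_pack std_map_le_iff wat_in_set)

lemma wat_pack_eq: "i \<in> {1..length u} \<Longrightarrow> j \<in> {1..length u} \<Longrightarrow> wat (pack u) i = wat (pack u) j \<longleftrightarrow> wat u i = wat u j"
  by (simp add: wat_pack std_map_eq_iff wat_in_set)

lemma wat_take: "i \<in> {1..n} \<Longrightarrow> wat (take n w) i = wat w i"
proof -
  assume "i \<in> {1..n}" then have "i - 1 < n" by auto
  then show ?thesis by (simp add: wat_def)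
qed

lemma wat_drop: "n \<le> length w \<Longrightarrow> i \<in> {1..length w - n} \<Longrightarrow> wat (drop n w) i = wat w (i + n)"
proof -
  assume "n \<le> length w" "i \<in> {1..length w - n}"
  then show ?thesis by (simp add: wat_def add.commute)
qed

lemma mem_shift: "(k::nat) \<in> (\<lambda>x. x + n) ` U \<longleftrightarrow> n \<le> k \<and> k - n \<in> U"
proof
  assume "k \<in> (\<lambda>x. x + n) ` U" then show "n \<le> k \<and> k - n \<in> U" by auto
next
  assume "n \<le> k \<and> k - n \<in> U" then show "k \<in> (\<lambda>x. x + n) ` U" by (intro image_eqI[of k _ "k - n"]) auto
qed

locale prod_setup =
  fixes T T' :: "nat set set" and n n' :: nat
  assumes T: "T \<in> topologies n" and T': "T' \<in> topologies n'"
begin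

abbreviation "P \<equiv> topo_prod T T'"

lemma P_mem: "V \<in> P \<longleftrightarrow> (\<exists>U\<in>T. \<exists>U'\<in>T'. V = U \<union> (\<lambda>k. k + n) ` U')"
  by (auto simp: topo_prod_def tdeg_top[OF T])

lemma P_intro: "U \<in> T \<Longrightarrow> U' \<in> T' \<Longrightarrow> U \<union> (\<lambda>k. k + n) ` U' \<in> P"
  using P_mem by blast

lemma tdeg_P: "tdeg P = n + n'"
proof -
  have "\<Union>P \<subseteq> {1..n + n'}"
    using top_facts(1)[OF T] top_facts(1)[OF T'] by (fastforce simp: P_mem mem_shift)
  moreover have "{1..n} \<union> (\<lambda>k. k + n) ` {1..n'} \<in> P" using top_facts(3)[OF T] top_facts(3)[OF T'] P_mem by blast
  moreover have "{1..n + n'} \<subseteq> {1..n} \<union> (\<lambda>k. k + n) ` {1..n'}"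
    by (auto simp: mem_shift)
  ultimately have "\<Union>P = {1..n+n'}" by blast
  then show ?thesis by (simp add: tdeg_def)
qed

lemma in_opens_left: "U \<in> T \<Longrightarrow> U' \<in> T' \<Longrightarrow> i \<le> n \<Longrightarrow> i \<in> U \<union> (\<lambda>k. k + n) ` U' \<longleftrightarrow> i \<in> U"
proof -
  assume U: "U \<in> T" and U': "U' \<in> T'" and i: "i \<le> n"
  have "U' \<subseteq> {1..n'}" using top_facts(1)[OF T'] U' by blast
  then have "0 \<notin> U'" by auto
  then show ?thesis using i by (auto simp: mem_shift)
qed

lemma in_opens_right: "U \<in> T \<Longrightarrow> U' \<in> T' \<Longrightarrow> n < i \<Longrightarrow> i \<in> U \<union> (\<lambda>k. k + n) ` U' \<longleftrightarrow> i - n \<in> U'"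
proof -
  assume U: "U \<in> T" and U': "U' \<in> T'" and i: "n < i"
  have "U \<subseteq> {1..n}" using top_facts(1)[OF T] U by blast
  then have "i \<notin> U" using i by auto
  then show ?thesis using i by (auto simp: mem_shift)
qed

lemma ball_P: "(\<forall>V\<in>P. Q V) \<longleftrightarrow> (\<forall>U\<in>T. \<forall>U'\<in>T'. Q (U \<union> (\<lambda>k. k + n) ` U'))"
proof
  assume h: "\<forall>V\<in>P. Q V"
  show "\<forall>U\<in>T. \<forall>U'\<in>T'. Q (U \<union> (\<lambda>k. k + n) ` U')"
  proof (intro ballI)
    fix U U' assume "U \<in> T" "U' \<in> T'"
    then have "U \<union> (\<lambda>k. k + n) ` U' \<in> P" using P_mem by blast
    then show "Q (U \<union> (\<lambda>k. k + n) ` U')" using h by blast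
  qed
next
  assume h: "\<forall>U\<in>T. \<forall>U'\<in>T'. Q (U \<union> (\<lambda>k. k + n) ` U')"
  show "\<forall>V\<in>P. Q V"
  proof
    fix V assume "V \<in> P"
    then obtain U U' where "U \<in> T" "U' \<in> T'" "V = U \<union> (\<lambda>k. k + n) ` U'" using P_mem by blast
    then show "Q V" using h by blast
  qed
qed

lemma tleq_P: "tleq P i j \<longleftrightarrow> (\<forall>U\<in>T. \<forall>U'\<in>T'. i \<in> U \<union> (\<lambda>k. k + n) ` U' \<longrightarrow> j \<in> U \<union> (\<lambda>k. k + n) ` U')"
  unfolding tleq_def by (rule ball_P)

lemma tleq_LL: "i \<le> n \<Longrightarrow> j \<le> n \<Longrightarrow> tleq P i j \<longleftrightarrow> tleq T i j"
proof -
  assume i: "i \<le> n" and j: "j \<le> n"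
  have "tleq P i j \<longleftrightarrow> (\<forall>U\<in>T. \<forall>U'\<in>T'. i \<in> U \<union> (\<lambda>k. k + n) ` U' \<longrightarrow> j \<in> U \<union> (\<lambda>k. k + n) ` U')"
    by (rule tleq_P)
  also have "\<dots> \<longleftrightarrow> (\<forall>U\<in>T. \<forall>U'\<in>T'. i \<in> U \<longrightarrow> j \<in> U)" using in_opens_left i j by simp
  also have "\<dots> \<longleftrightarrow> tleq T i j" unfolding tleq_def using top_facts(2)[OF T'] by blast
  finally show ?thesis .
qed

lemma tleq_RR: "n < i \<Longrightarrow> n < j \<Longrightarrow> tleq P i j \<longleftrightarrow> tleq T' (i - n) (j - n)"
proof -
  assume i: "n < i" and j: "n < j"
  have "tleq P i j \<longleftrightarrow> (\<forall>U\<in>T. \<forall>U'\<in>T'. i \<in> U \<union> (\<lambda>k. k + n) ` U' \<longrightarrow> j \<in> U \<union> (\<lambda>k. k + n) ` U')"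
    by (rule tleq_P)
  also have "\<dots> \<longleftrightarrow> (\<forall>U\<in>T. \<forall>U'\<in>T'. i - n \<in> U' \<longrightarrow> j - n \<in> U')" using in_opens_right i j by simp
  also have "\<dots> \<longleftrightarrow> tleq T' (i - n) (j - n)" unfolding tleq_def using top_facts(2)[OF T] by blast
  finally show ?thesis .
qed

lemma tleq_LR: "i \<in> {1..n} \<Longrightarrow> n < j \<Longrightarrow> j \<le> n + n' \<Longrightarrow> \<not> tleq P i j \<and> \<not> tleq P j i"
proof -
  assume i: "i \<in> {1..n}" and j: "n < j" and j2: "j \<le> n + n'"
  have A: "{1..n} \<union> (\<lambda>k. k + n) ` {} \<in> P" by (rule P_intro[OF top_facts(3)[OF T] top_facts(2)[OF T']])
  have B: "{} \<union> (\<lambda>k. k + n) ` {1..n'} \<in> P" by (rule P_intro[OF top_facts(2)[OF T] top_facts(3)[OF T']])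
  have iA: "i \<in> {1..n} \<union> (\<lambda>k. k + n) ` {}" using i by simp
  have jA: "j \<notin> {1..n} \<union> (\<lambda>k. k + n) ` {}" using j by simp
  have "\<not> tleq P i j" unfolding tleq_def using A iA jA by (meson bspec)
  moreover have "\<not> tleq P j i"
  proof -
    have "j \<in> {} \<union> (\<lambda>k. k + n) ` {1..n'}" using j2 j by (simp add: mem_shift)
    moreover have "i \<notin> {} \<union> (\<lambda>k. k + n) ` {1..n'}" using i by (simp add: mem_shift)
    ultimately show ?thesis unfolding tleq_def using B by (meson bspec)
  qed
  ultimately show ?thesis by blast
qed


lemma img_shift_down: "(\<lambda>i. i - n) ` {Suc n..n + n'} = {1..n'}"
proof
  show "(\<lambda>i. i - n) ` {Suc n..n + n'} \<subseteq> {1..n'}" by auto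
  show "{1..n'} \<subseteq> (\<lambda>i. i - n) ` {Suc n..n + n'}"
  proof
    fix x assume "x \<in> {1..n'}" then show "x \<in> (\<lambda>i. i - n) ` {Suc n..n + n'}"
      by (intro image_eqI[of x _ "x + n"]) auto
  qed
qed

context
  fixes w :: "nat list"
  assumes lw: "length w = n + n'"
begin

abbreviation "ft \<equiv> pack (take n w)"
abbreviation "gd \<equiv> pack (drop n w)"

lemma len_ft: "length ft = n" using lw by simp
lemma len_gd: "length gd = n'" using lw by simp

lemma ft_le: "i \<in> {1..n} \<Longrightarrow> j \<in> {1..n} \<Longrightarrow> wat ft i \<le> wat ft j \<longleftrightarrow> wat w i \<le> wat w j"
  using lw by (simp add: wat_pack_le wat_take)
lemma ft_eq: "i \<in> {1..n} \<Longrightarrow> j \<in> {1..n} \<Longrightarrow> wat ft i = wat ft j \<longleftrightarrow> wat w i = wat w j"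
  using lw by (simp add: wat_pack_eq wat_take)
lemma gd_le: "i \<in> {1..n'} \<Longrightarrow> j \<in> {1..n'} \<Longrightarrow> wat gd i \<le> wat gd j \<longleftrightarrow> wat w (i + n) \<le> wat w (j + n)"
  using lw by (simp add: wat_pack_le wat_drop)
lemma gd_eq: "i \<in> {1..n'} \<Longrightarrow> j \<in> {1..n'} \<Longrightarrow> wat gd i = wat gd j \<longleftrightarrow> wat w (i + n) = wat w (j + n)"
  using lw by (simp add: wat_pack_eq wat_drop)

lemma part_iff: "w \<in> Tpartitions P \<longleftrightarrow> packed w \<and> ft \<in> Tpartitions T \<and> gd \<in> Tpartitions T'"
proof -
  have "(\<forall>i\<in>{1..n+n'}. \<forall>j\<in>{1..n+n'}. tleq P i j \<longrightarrow> wat w i \<le> wat w j) \<longleftrightarrow>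
        (\<forall>i\<in>{1..n}. \<forall>j\<in>{1..n}. tleq T i j \<longrightarrow> wat ft i \<le> wat ft j) \<and>
        (\<forall>i\<in>{1..n'}. \<forall>j\<in>{1..n'}. tleq T' i j \<longrightarrow> wat gd i \<le> wat gd j)" (is "?A \<longleftrightarrow> ?B \<and> ?C")
  proof
    assume A: ?A
    have B: ?B
    proof (intro ballI impI)
      fix i j assume i: "i \<in> {1..n}" and j: "j \<in> {1..n}" and t: "tleq T i j"
      then have "tleq P i j" using tleq_LL by simp
      then show "wat ft i \<le> wat ft j" using A i j ft_le by auto
    qed
    have C: ?C
    proof (intro ballI impI)
      fix i j assume i: "i \<in> {1..n'}" and j: "j \<in> {1..n'}" and t: "tleq T' i j"
      then have "tleq P (i + n) (j + n)" using tleq_RR[of "i + n" "j + n"] by simp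
      then have "wat w (i + n) \<le> wat w (j + n)" using A i j by auto
      then show "wat gd i \<le> wat gd j" using i j gd_le by simp
    qed
    from B C show "?B \<and> ?C" ..
  next
    assume BC: "?B \<and> ?C"
    show ?A
    proof (intro ballI impI)
      fix i j assume i: "i \<in> {1..n+n'}" and j: "j \<in> {1..n+n'}" and t: "tleq P i j"
      consider "i \<le> n" "j \<le> n" | "n < i" "n < j" | "i \<le> n" "n < j" | "n < i" "j \<le> n" by linarith
      then show "wat w i \<le> wat w j"
      proof cases
        case 1
        then have "tleq T i j" using t tleq_LL by simp
        then show ?thesis using BC 1 i j ft_le by auto
      next
        case 2
        then have "tleq T' (i - n) (j - n)" using t tleq_RR by simp
        moreover have ij': "i - n \<in> {1..n'}" "j - n \<in> {1..n'}" using 2 i j by auto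
        ultimately have "wat gd (i - n) \<le> wat gd (j - n)" using BC by blast
        then show ?thesis using gd_le[OF ij'] 2 by simp
      next
        case 3 then show ?thesis using tleq_LR[of i j] t i j by auto
      next
        case 4 then show ?thesis using tleq_LR[of j i] t i j by auto
      qed
    qed
  qed
  then show ?thesis
    unfolding Tpartitions_def tdeg_P tdeg_top[OF T] tdeg_top[OF T'] using lw len_ft len_gd packed_pack
    by auto
qed

lemma coef_prod: "coef q1 q2 q3 P w = coef q1 q2 q3 T ft * coef q1 q2 q3 T' gd"
proof -
  have un: "{1..n+n'} = {1..n} \<union> {Suc n..n+n'}" by auto
  have d: "{1..n} \<inter> {Suc n..n+n'} = {}" by auto
  have c: "\<And>a b. a \<in> {1..n} \<Longrightarrow> b \<in> {Suc n..n+n'} \<Longrightarrow> \<not> tleq P a b \<and> \<not> tleq P b a \<and> a < b"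
    using tleq_LR by auto
  note sp0 = E_split_rel[of "{1..n}" "{Suc n..n+n'}" "tleq P", OF finite_atLeastAtMost finite_atLeastAtMost d c]
  have s1: "card (E1 (tleq P) (wat w) {1..n+n'}) = card (E1 (tleq P) (wat w) {1..n}) + card (E1 (tleq P) (wat w) {Suc n..n+n'})"
    unfolding un by (rule sp0(1))
  have s2: "card (E2 (tleq P) (wat w) {1..n+n'}) = card (E2 (tleq P) (wat w) {1..n}) + card (E2 (tleq P) (wat w) {Suc n..n+n'})"
    unfolding un by (rule sp0(2))
  have s3: "card (E3 (tleq P) (wat w) {1..n+n'}) = card (E3 (tleq P) (wat w) {1..n}) + card (E3 (tleq P) (wat w) {Suc n..n+n'})"
    unfolding un by (rule sp0(3))
  interpret L: relabel "\<lambda>i. i" "{1..n}" "{1..n}" "tleq P" "tleq T" "wat w" "wat ft"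
    by unfold_locales (auto simp: tleq_LL ft_eq)
  interpret R: relabel "\<lambda>i. i - n" "{Suc n..n+n'}" "{1..n'}" "tleq P" "tleq T'" "wat w" "wat gd"
  proof unfold_locales
    show "(\<lambda>i. i - n) ` {Suc n..n + n'} = {1..n'}" by (rule img_shift_down)
  next
    fix a b assume a: "a \<in> {Suc n..n + n'}" and b: "b \<in> {Suc n..n + n'}"
    show "(a - n < b - n) = (a < b)" using a b by auto
    show "tleq T' (a - n) (b - n) = tleq P a b" using a b tleq_RR by auto
    have "a - n \<in> {1..n'}" "b - n \<in> {1..n'}" using a b by auto
    then show "(wat gd (a - n) = wat gd (b - n)) = (wat w a = wat w b)" using gd_eq a b by auto
  qed
  show ?thesis unfolding coef_def ell1_E ell2_E ell3_E tdeg_P tdeg_top[OF T] tdeg_top[OF T'] s1 s2 s3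
    L.E1 L.E2 L.E3 R.E1 R.E2 R.E3 by (simp add: power_add mult_ac)
qed

end

lemma prod_basis: "gamma_basis q1 q2 q3 P = WQ_mult (gamma_basis q1 q2 q3 T) (gamma_basis q1 q2 q3 T')"
proof (rule poly_mapping_eqI)
  fix w
  have lf: "f \<in> Tpartitions T \<Longrightarrow> length f = n" for f using Tpartitions_packed tdeg_top[OF T] by auto
  have "lk (WQ_mult (gamma_basis q1 q2 q3 T) (gamma_basis q1 q2 q3 T')) w =
    (\<Sum>f\<in>Tpartitions T. \<Sum>g\<in>Tpartitions T'. coef q1 q2 q3 T f * coef q1 q2 q3 T' g *
       (if packed w \<and> length w = n + n' \<and> pack (take n w) = f \<and> pack (drop n w) = g then 1 else 0))"
    unfolding WQ_mult_def
    apply (subst lookup_bilin_ext_sup[OF finite_Tpartitions keys_gamma finite_Tpartitions keys_gamma])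
    apply (intro sum.cong refl)
    subgoal for f g
    proof -
      assume f: "f \<in> Tpartitions T" and g: "g \<in> Tpartitions T'"
      have l1: "length f = n" using f Tpartitions_packed tdeg_top[OF T] by auto
      have l2: "length g = n'" using g Tpartitions_packed tdeg_top[OF T'] by auto
      show ?thesis using f g by (simp add: lookup_gamma lookup_wq_prod l1 l2)
    qed
    done
  also have "\<dots> = lk (gamma_basis q1 q2 q3 P) w"
  proof (cases "packed w \<and> length w = n + n'")
    case True
    then have lw: "length w = n + n'" and pw: "packed w" by auto
    have "(\<Sum>f\<in>Tpartitions T. \<Sum>g\<in>Tpartitions T'. coef q1 q2 q3 T f * coef q1 q2 q3 T' g *
       (if packed w \<and> length w = n + n' \<and> pack (take n w) = f \<and> pack (drop n w) = g then 1 else 0)) =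
      (\<Sum>p\<in>Tpartitions T \<times> Tpartitions T'. if p = (pack (take n w), pack (drop n w)) then
        coef q1 q2 q3 T (fst p) * coef q1 q2 q3 T' (snd p) else 0)"
      unfolding sum.cartesian_product using True by (intro sum.cong refl) (auto split: if_splits)
    also have "\<dots> = (if pack (take n w) \<in> Tpartitions T \<and> pack (drop n w) \<in> Tpartitions T' then
        coef q1 q2 q3 T (pack (take n w)) * coef q1 q2 q3 T' (pack (drop n w)) else 0)"
      by (subst sum.delta) (auto simp: finite_Tpartitions)
    also have "\<dots> = lk (gamma_basis q1 q2 q3 P) w"
    proof -
      have cp: "coef q1 q2 q3 P w = coef q1 q2 q3 T (pack (take n w)) * coef q1 q2 q3 T' (pack (drop n w))"
        by (rule coef_prod[OF lw])
      show ?thesis using part_iff[OF lw] cp pw by (simp add: lookup_gamma)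
    qed
    finally show ?thesis .
  next
    case False
    then have "w \<notin> Tpartitions P" using Tpartitions_packed tdeg_P by metis
    moreover have "(\<Sum>f\<in>Tpartitions T. \<Sum>g\<in>Tpartitions T'. coef q1 q2 q3 T f * coef q1 q2 q3 T' g *
       (if packed w \<and> length w = n + n' \<and> pack (take n w) = f \<and> pack (drop n w) = g then 1 else 0)) = 0"
    proof -
      have h: "(packed w \<and> length w = n + n' \<and> X) = False" for X using False by auto
      show ?thesis by (simp only: h) simp
    qed
    ultimately show ?thesis by (simp add: lookup_gamma)
  qed
  finally show "lk (gamma_basis q1 q2 q3 P) w = lk (WQ_mult (gamma_basis q1 q2 q3 T) (gamma_basis q1 q2 q3 T')) w" ..
qed

end

lemma conj4:
  assumes x: "Poly_Mapping.keys x \<subseteq> all_topologies" and y: "Poly_Mapping.keys y \<subseteq> all_topologies"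
  shows "Gamma q1 q2 q3 (HT_mult x y) = WQ_mult (Gamma q1 q2 q3 x) (Gamma q1 q2 q3 y)"
proof -
  let ?g = "gamma_basis q1 q2 q3"
  have "Gamma q1 q2 q3 (HT_mult x y) = lin_ext (\<lambda>b. lin_ext (\<lambda>c. ?g (topo_prod b c)) y) x"
    unfolding Gamma_def HT_mult_def bilin_ext_lin lin_ext_comp by simp
  also have "\<dots> = lin_ext (\<lambda>b. lin_ext (\<lambda>c. WQ_mult (?g b) (?g c)) y) x"
  proof (intro lin_ext_cong)
    fix b c assume b: "b \<in> Poly_Mapping.keys x" and c: "c \<in> Poly_Mapping.keys y"
    obtain n where bn: "b \<in> topologies n" using b x by (auto simp: all_topologies_def)
    obtain n' where cn: "c \<in> topologies n'" using c y by (auto simp: all_topologies_def)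
    interpret prod_setup b c n n' using bn cn by unfold_locales
    show "?g (topo_prod b c) = WQ_mult (?g b) (?g c)" by (rule prod_basis)
  qed
  also have "\<dots> = WQ_mult (Gamma q1 q2 q3 x) (Gamma q1 q2 q3 y)"
    unfolding WQ_mult_def bilin_ext_lin Gamma_def lin_ext_comp
    by (simp add: lin_ext_swap[of "\<lambda>u c. lin_ext (wq_prod u) (?g c)"])
  finally show ?thesis .
qed


lemma set_wat: "set w = wat w ` {1..length w}"
proof
  show "set w \<subseteq> wat w ` {1..length w}"
  proof
    fix x assume "x \<in> set w"
    then obtain p where p: "p < length w" "w ! p = x" by (auto simp: in_set_conv_nth)
    then show "x \<in> wat w ` {1..length w}" by (intro image_eqI[of x _ "Suc p"]) (auto simp: wat_def)
  qed
  show "wat w ` {1..length w} \<subseteq> set w" using wat_in_set by blast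
qed

definition mgw :: "nat \<Rightarrow> nat set \<Rightarrow> nat list \<Rightarrow> nat list \<Rightarrow> nat list" where
  "mgw n U u v = map (\<lambda>i. if i \<in> U then wat v (std_map U i) + wmax u else wat u (std_map ({1..n} - U) i)) [1..<Suc n]"

lemma length_mgw[simp]: "length (mgw n U u v) = n" by (simp add: mgw_def)

lemma wat_mgw: "i \<in> {1..n} \<Longrightarrow> wat (mgw n U u v) i =
   (if i \<in> U then wat v (std_map U i) + wmax u else wat u (std_map ({1..n} - U) i))"
proof -
  assume "i \<in> {1..n}"
  then have a: "i - 1 < n" by auto
  have b: "[1..<Suc n] ! (i - 1) = i" using a \<open>i \<in> {1..n}\<close> by (subst nth_upt) auto
  have c: "Suc (i - Suc 0) = i" using \<open>i \<in> {1..n}\<close> by auto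
  show ?thesis unfolding mgw_def wat_def[of "map _ _"] using a by (simp add: b c del: upt_Suc)
qed

lemma wmax_interval: "set w = {1..m} \<Longrightarrow> wmax w = m"
proof -
  assume s: "set w = {1..m}"
  show ?thesis
  proof (cases "m = 0")
    case True then show ?thesis using s by (simp add: wmax_def)
  next
    case False
    then have "w \<noteq> []" using s by auto
    moreover have "Max {1..m} = m" using False by (intro Max_eqI) auto
    ultimately show ?thesis using s by (simp add: wmax_def)
  qed
qed

locale coprod_setup =
  fixes T :: "nat set set" and n :: nat
  assumes T: "T \<in> topologies n"
begin

abbreviation S :: "nat set \<Rightarrow> nat set set" where "S X \<equiv> std X (restr T X)"

lemma Union_restr: "X \<subseteq> {1..n} \<Longrightarrow> \<Union>(restr T X) = X"
  using top_facts(3)[OF T] by (auto simp: restr_def)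

lemma tdeg_S: "X \<subseteq> {1..n} \<Longrightarrow> tdeg (S X) = card X"
proof -
  assume X: "X \<subseteq> {1..n}"
  have f: "finite X" using X finite_subset by blast
  have "\<Union>(S X) = std_map X ` \<Union>(restr T X)" by (auto simp: std_def)
  also have "\<dots> = {1..card X}" using Union_restr[OF X] std_map_image[OF f] by simp
  finally show ?thesis by (simp add: tdeg_def)
qed

lemma tleq_S: "X \<subseteq> {1..n} \<Longrightarrow> i \<in> X \<Longrightarrow> j \<in> X \<Longrightarrow> tleq (S X) (std_map X i) (std_map X j) \<longleftrightarrow> tleq T i j"
proof -
  assume X: "X \<subseteq> {1..n}" and i: "i \<in> X" and j: "j \<in> X"
  have f: "finite X" using X finite_subset by blast
  have inj: "inj_on (std_map X) X" by (rule std_map_inj[OF f])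
  have mem: "std_map X a \<in> std_map X ` (U \<inter> X) \<longleftrightarrow> a \<in> U" if "a \<in> X" for a U
    using that inj by (auto simp: inj_on_def)
  have "tleq (S X) (std_map X i) (std_map X j) \<longleftrightarrow> (\<forall>U\<in>T. std_map X i \<in> std_map X ` (U \<inter> X) \<longrightarrow> std_map X j \<in> std_map X ` (U \<inter> X))"
    unfolding tleq_def std_def restr_def by (simp add: image_image)
  also have "\<dots> \<longleftrightarrow> tleq T i j" unfolding tleq_def using mem[OF i] mem[OF j] by simp
  finally show ?thesis .
qed

lemma std_surj: "X \<subseteq> {1..n} \<Longrightarrow> a \<in> {1..card X} \<Longrightarrow> \<exists>i\<in>X. a = std_map X i"
proof -
  assume X: "X \<subseteq> {1..n}" and a: "a \<in> {1..card X}"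
  have f: "finite X" using X finite_subset by blast
  have "a \<in> std_map X ` X" using std_map_image[OF f] a by simp
  then show ?thesis by blast
qed

lemma part_S:
  assumes X: "X \<subseteq> {1..n}" and l: "length w = card X"
  shows "w \<in> Tpartitions (S X) \<longleftrightarrow> packed w \<and> (\<forall>i\<in>X. \<forall>j\<in>X. tleq T i j \<longrightarrow> wat w (std_map X i) \<le> wat w (std_map X j))"
proof -
  have f: "finite X" using X finite_subset by blast
  have "(\<forall>a\<in>{1..card X}. \<forall>b\<in>{1..card X}. tleq (S X) a b \<longrightarrow> wat w a \<le> wat w b) \<longleftrightarrow>
        (\<forall>i\<in>X. \<forall>j\<in>X. tleq T i j \<longrightarrow> wat w (std_map X i) \<le> wat w (std_map X j))"
  proof
    assume h: "\<forall>a\<in>{1..card X}. \<forall>b\<in>{1..card X}. tleq (S X) a b \<longrightarrow> wat w a \<le> wat w b"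
    show "\<forall>i\<in>X. \<forall>j\<in>X. tleq T i j \<longrightarrow> wat w (std_map X i) \<le> wat w (std_map X j)"
      using h std_map_range[OF f] tleq_S[OF X] by blast
  next
    assume h: "\<forall>i\<in>X. \<forall>j\<in>X. tleq T i j \<longrightarrow> wat w (std_map X i) \<le> wat w (std_map X j)"
    show "\<forall>a\<in>{1..card X}. \<forall>b\<in>{1..card X}. tleq (S X) a b \<longrightarrow> wat w a \<le> wat w b"
    proof (intro ballI impI)
      fix a b assume a: "a \<in> {1..card X}" and b: "b \<in> {1..card X}" and t: "tleq (S X) a b"
      obtain i where i: "i \<in> X" "a = std_map X i" using std_surj[OF X a] by blast
      obtain j where j: "j \<in> X" "b = std_map X j" using std_surj[OF X b] by blast
      show "wat w a \<le> wat w b" using h i j t tleq_S[OF X] by auto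
    qed
  qed
  then show ?thesis unfolding Tpartitions_def tdeg_S[OF X] using l by auto
qed

lemma coef_S:
  assumes X: "X \<subseteq> {1..n}"
    and Fv: "\<And>a b. a \<in> X \<Longrightarrow> b \<in> X \<Longrightarrow> wat w (std_map X a) = wat w (std_map X b) \<longleftrightarrow> F a = F b"
  shows "card (E1 (tleq (S X)) (wat w) {1..tdeg (S X)}) = card (E1 (tleq T) F X)"
    "card (E2 (tleq (S X)) (wat w) {1..tdeg (S X)}) = card (E2 (tleq T) F X)"
    "card (E3 (tleq (S X)) (wat w) {1..tdeg (S X)}) = card (E3 (tleq T) F X)"
proof -
  have f: "finite X" using X finite_subset by blast
  interpret relabel "std_map X" X "{1..card X}" "tleq T" "tleq (S X)" F "wat w"
    by unfold_locales (auto simp: std_map_less_iff[OF f] std_map_image[OF f] tleq_S[OF X] Fv)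
  show "card (E1 (tleq (S X)) (wat w) {1..tdeg (S X)}) = card (E1 (tleq T) F X)"
    using E1 tdeg_S[OF X] by simp
  show "card (E2 (tleq (S X)) (wat w) {1..tdeg (S X)}) = card (E2 (tleq T) F X)"
    using E2 tdeg_S[OF X] by simp
  show "card (E3 (tleq (S X)) (wat w) {1..tdeg (S X)}) = card (E3 (tleq T) F X)"
    using E3 tdeg_S[OF X] by simp
qed


context
  fixes u v :: "nat list" and U :: "nat set"
  assumes U: "U \<in> T" and uP: "u \<in> Tpartitions (S ({1..n} - U))" and vP: "v \<in> Tpartitions (S U)"
begin

abbreviation "Uc \<equiv> {1..n} - U"
abbreviation "mg \<equiv> mgw n U u v"
abbreviation "kk \<equiv> wmax u"

lemma U_sub: "U \<subseteq> {1..n}" using top_facts(1)[OF T] U by blast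
lemma Uc_sub: "Uc \<subseteq> {1..n}" by blast
lemma fU: "finite U" using U_sub finite_subset by blast
lemma fUc: "finite Uc" by simp

lemma len_u: "length u = card Uc" using uP Tpartitions_packed tdeg_S[OF Uc_sub] by auto
lemma len_v: "length v = card U" using vP Tpartitions_packed tdeg_S[OF U_sub] by auto
lemma pu: "packed u" using uP Tpartitions_packed by auto
lemma pv: "packed v" using vP Tpartitions_packed by auto

lemma u_range: "i \<in> Uc \<Longrightarrow> 1 \<le> wat u (std_map Uc i) \<and> wat u (std_map Uc i) \<le> kk"
  using packed_wat_pos[OF pu] std_map_range[OF fUc] len_u by simp

lemma v_range: "i \<in> U \<Longrightarrow> 1 \<le> wat v (std_map U i) \<and> wat v (std_map U i) \<le> wmax v"
  using packed_wat_pos[OF pv] std_map_range[OF fU] len_v by simp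

lemma mg_cases: "i \<in> {1..n} \<Longrightarrow> (i \<in> U \<and> kk < wat mg i) \<or> (i \<notin> U \<and> 1 \<le> wat mg i \<and> wat mg i \<le> kk)"
proof -
  assume i: "i \<in> {1..n}"
  show ?thesis
  proof (cases "i \<in> U")
    case True
    then have "wat mg i = wat v (std_map U i) + kk" using i by (simp add: wat_mgw)
    moreover have "1 \<le> wat v (std_map U i)" using v_range[OF True] by simp
    ultimately show ?thesis using True by simp
  next
    case False
    then have "i \<in> Uc" using i by simp
    moreover have "wat mg i = wat u (std_map Uc i)" using i False by (simp add: wat_mgw)
    ultimately show ?thesis using u_range False by simp
  qed
qed

lemma mg_small: "i \<in> {1..n} \<Longrightarrow> wat mg i \<in> {1..kk} \<longleftrightarrow> i \<notin> U"
  using mg_cases by fastforce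

lemma mg_big: "i \<in> {1..n} \<Longrightarrow> kk < wat mg i \<longleftrightarrow> i \<in> U"
  using mg_cases by fastforce

lemma set_u: "set u = {1..kk}" using packed_set[OF pu] .
lemma set_v: "set v = {1..wmax v}" using packed_set[OF pv] .

lemma set_mg: "set mg = {1..kk + wmax v}"
proof -
  have "set mg = wat mg ` {1..n}" using set_wat[of mg] by simp
  also have "\<dots> = wat mg ` Uc \<union> wat mg ` U" using U_sub by blast
  also have "wat mg ` Uc = wat u ` (std_map Uc ` Uc)" by (auto simp: wat_mgw image_image)
  also have "\<dots> = set u" using set_wat[of u] std_map_image[OF fUc] len_u by simp
  also have "wat mg ` U = (\<lambda>x. x + kk) ` (wat v ` (std_map U ` U))"
    using U_sub by (auto simp: wat_mgw image_image intro!: image_cong)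
  also have "\<dots> = (\<lambda>x. x + kk) ` set v" using set_wat[of v] std_map_image[OF fU] len_v by simp
  also have "set u \<union> (\<lambda>x. x + kk) ` set v = {1..kk + wmax v}"
  proof
    show "set u \<union> (\<lambda>x. x + kk) ` set v \<subseteq> {1..kk + wmax v}" using set_u set_v by auto
    show "{1..kk + wmax v} \<subseteq> set u \<union> (\<lambda>x. x + kk) ` set v"
    proof
      fix x assume x: "x \<in> {1..kk + wmax v}"
      show "x \<in> set u \<union> (\<lambda>x. x + kk) ` set v"
      proof (cases "x \<le> kk")
        case True then show ?thesis using x set_u by auto
      next
        case False
        then have "x - kk \<in> set v" using x set_v by auto
        then show ?thesis using False by (auto intro!: image_eqI[of x _ "x - kk"])
      qed
    qed
  qed
  finally show ?thesis .
qed

lemma packed_mg: "packed mg" using set_mg by (auto simp: packed_def)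
lemma wmax_mg: "wmax mg = kk + wmax v" using wmax_interval[OF set_mg] .

lemma mg_part: "mg \<in> Tpartitions T"
proof -
  have "wat mg i \<le> wat mg j" if i: "i \<in> {1..n}" and j: "j \<in> {1..n}" and t: "tleq T i j" for i j
  proof (cases "i \<in> U")
    case True
    then have jU: "j \<in> U" using t U by (auto simp: tleq_def)
    have "tleq (S U) (std_map U i) (std_map U j)" using tleq_S[OF U_sub True jU] t by simp
    moreover have "std_map U i \<in> {1..tdeg (S U)}" "std_map U j \<in> {1..tdeg (S U)}"
      using std_map_range[OF fU] True jU tdeg_S[OF U_sub] by auto
    ultimately have "wat v (std_map U i) \<le> wat v (std_map U j)" using vP by (auto simp: Tpartitions_def)
    then show ?thesis using True jU i j by (simp add: wat_mgw)
  next
    case False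
    show ?thesis
    proof (cases "j \<in> U")
      case True
      then show ?thesis using mg_big[OF j] mg_small[OF i] False by auto
    next
      case jU: False
      have ic: "i \<in> Uc" "j \<in> Uc" using i j False jU by auto
      have "tleq (S Uc) (std_map Uc i) (std_map Uc j)" using tleq_S[OF Uc_sub ic] t by simp
      moreover have "std_map Uc i \<in> {1..tdeg (S Uc)}" "std_map Uc j \<in> {1..tdeg (S Uc)}"
        using std_map_range[OF fUc] ic tdeg_S[OF Uc_sub] by auto
      ultimately have "wat u (std_map Uc i) \<le> wat u (std_map Uc j)" using uP by (auto simp: Tpartitions_def)
      then show ?thesis using False jU i j by (simp add: wat_mgw)
    qed
  qed
  then show ?thesis unfolding Tpartitions_def tdeg_top[OF T] using packed_mg by auto
qed

lemma filter_small: "filter (\<lambda>x. x \<in> {1..kk}) mg = u"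
proof -
  have X: "{i \<in> {1..length mg}. wat mg i \<in> {1..kk}} = Uc"
  proof (rule set_eqI)
    fix i show "i \<in> {i \<in> {1..length mg}. wat mg i \<in> {1..kk}} \<longleftrightarrow> i \<in> Uc" using mg_cases[of i] by auto
  qed
  note fw = filter_wat[of "\<lambda>x. x \<in> {1..kk}" mg, unfolded X]
  show ?thesis
  proof (rule list_eq_wat)
    show "length (filter (\<lambda>x. x \<in> {1..kk}) mg) = length u" using fw len_u by simp
  next
    fix a assume a: "a \<in> {1..length (filter (\<lambda>x. x \<in> {1..kk}) mg)}"
    then have "a \<in> {1..card Uc}" using fw by simp
    then obtain i where i: "i \<in> Uc" "a = std_map Uc i" using std_surj[OF Uc_sub] by blast
    show "wat (filter (\<lambda>x. x \<in> {1..kk}) mg) a = wat u a"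
      using fw i by (simp add: wat_mgw)
  qed
qed

lemma filter_big: "pack (filter (\<lambda>x. x \<notin> {1..kk}) mg) = v"
proof -
  have X: "{i \<in> {1..length mg}. wat mg i \<notin> {1..kk}} = U"
  proof (rule set_eqI)
    fix i show "i \<in> {i \<in> {1..length mg}. wat mg i \<notin> {1..kk}} \<longleftrightarrow> i \<in> U" using mg_cases[of i] U_sub by auto
  qed
  note fw = filter_wat[of "\<lambda>x. x \<notin> {1..kk}" mg, unfolded X]
  have "filter (\<lambda>x. x \<notin> {1..kk}) mg = map (\<lambda>x. x + kk) v"
  proof (rule list_eq_wat)
    show "length (filter (\<lambda>x. x \<notin> {1..kk}) mg) = length (map (\<lambda>x. x + kk) v)" using fw len_v by simp
  next
    fix a assume a: "a \<in> {1..length (filter (\<lambda>x. x \<notin> {1..kk}) mg)}"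
    then have ac: "a \<in> {1..card U}" using fw by simp
    then obtain i where i: "i \<in> U" "a = std_map U i" using std_surj[OF U_sub] by blast
    have "a - 1 < length v" using ac len_v by auto
    then have "wat (map (\<lambda>x. x + kk) v) a = wat v a + kk" by (simp add: wat_def)
    then show "wat (filter (\<lambda>x. x \<notin> {1..kk}) mg) a = wat (map (\<lambda>x. x + kk) v) a"
      using fw i U_sub by (auto simp: wat_mgw)
  qed
  then show ?thesis by (simp add: pack_shift pack_packed[OF pv])
qed

lemma up_mg: "{i \<in> {1..n}. kk < wat mg i} = U" using mg_big U_sub by auto

lemma coef_mg: "coef q1 q2 q3 T mg = coef q1 q2 q3 (S Uc) u * coef q1 q2 q3 (S U) v"
proof -
  have un: "{1..n} = Uc \<union> U" using U_sub by auto
  have d: "Uc \<inter> U = {}" by auto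
  have c: "\<And>a b. a \<in> Uc \<Longrightarrow> b \<in> U \<Longrightarrow> wat mg a \<noteq> wat mg b"
  proof -
    fix a b assume "a \<in> Uc" "b \<in> U"
    then show "wat mg a \<noteq> wat mg b" using mg_cases[of a] mg_cases[of b] U_sub by auto
  qed
  note sp0 = E_split_val[of Uc U "wat mg", OF fUc fU d c]
  have cu: "\<And>a b. a \<in> Uc \<Longrightarrow> b \<in> Uc \<Longrightarrow> wat u (std_map Uc a) = wat u (std_map Uc b) \<longleftrightarrow> wat mg a = wat mg b"
    by (auto simp: wat_mgw)
  have cv: "\<And>a b. a \<in> U \<Longrightarrow> b \<in> U \<Longrightarrow> wat v (std_map U a) = wat v (std_map U b) \<longleftrightarrow> wat mg a = wat mg b"
  proof -
    fix a b assume ab: "a \<in> U" "b \<in> U"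
    then have "a \<in> {1..n}" "b \<in> {1..n}" using U_sub by auto
    then show "wat v (std_map U a) = wat v (std_map U b) \<longleftrightarrow> wat mg a = wat mg b" using ab by (simp add: wat_mgw)
  qed
  have A1: "card (E1 (tleq (S Uc)) (wat u) {1..tdeg (S Uc)}) = card (E1 (tleq T) (wat mg) Uc)"
   and A2: "card (E2 (tleq (S Uc)) (wat u) {1..tdeg (S Uc)}) = card (E2 (tleq T) (wat mg) Uc)"
   and A3: "card (E3 (tleq (S Uc)) (wat u) {1..tdeg (S Uc)}) = card (E3 (tleq T) (wat mg) Uc)"
    using coef_S[OF Uc_sub cu] by blast+
  have B1: "card (E1 (tleq (S U)) (wat v) {1..tdeg (S U)}) = card (E1 (tleq T) (wat mg) U)"
   and B2: "card (E2 (tleq (S U)) (wat v) {1..tdeg (S U)}) = card (E2 (tleq T) (wat mg) U)"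
   and B3: "card (E3 (tleq (S U)) (wat v) {1..tdeg (S U)}) = card (E3 (tleq T) (wat mg) U)"
    using coef_S[OF U_sub cv] by blast+
  have s1: "card (E1 (tleq T) (wat mg) {1..n}) = card (E1 (tleq T) (wat mg) Uc) + card (E1 (tleq T) (wat mg) U)"
    using sp0(1) un by metis
  have s2: "card (E2 (tleq T) (wat mg) {1..n}) = card (E2 (tleq T) (wat mg) Uc) + card (E2 (tleq T) (wat mg) U)"
    using sp0(2) un by metis
  have s3: "card (E3 (tleq T) (wat mg) {1..n}) = card (E3 (tleq T) (wat mg) Uc) + card (E3 (tleq T) (wat mg) U)"
    using sp0(3) un by metis
  show ?thesis unfolding coef_def ell1_E ell2_E ell3_E tdeg_top[OF T] s1 s2 s3
    by (simp only: A1 A2 A3 B1 B2 B3 power_add mult_ac)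
qed

end

context
  fixes f :: "nat list" and k :: nat
  assumes fP: "f \<in> Tpartitions T" and kf: "k \<le> wmax f"
begin

abbreviation "Uf \<equiv> {i \<in> {1..n}. k < wat f i}"
abbreviation "Ufc \<equiv> {1..n} - Uf"
abbreviation "uf \<equiv> filter (\<lambda>x. x \<in> {1..k}) f"
abbreviation "fb \<equiv> filter (\<lambda>x. x \<notin> {1..k}) f"
abbreviation "vf \<equiv> pack fb"

lemma lf: "length f = n" using fP Tpartitions_packed tdeg_top[OF T] by auto
lemma pf: "packed f" using fP Tpartitions_packed by auto
lemma f_pos: "i \<in> {1..n} \<Longrightarrow> 1 \<le> wat f i \<and> wat f i \<le> wmax f" using packed_wat_pos[OF pf] lf by simp
lemma f_mono: "i \<in> {1..n} \<Longrightarrow> j \<in> {1..n} \<Longrightarrow> tleq T i j \<Longrightarrow> wat f i \<le> wat f j"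
  using fP by (auto simp: Tpartitions_def tdeg_top[OF T])

lemma Uf_sub: "Uf \<subseteq> {1..n}" by blast
lemma fUf: "finite Uf" by simp

lemma Xs: "{i \<in> {1..length f}. wat f i \<in> {1..k}} = Ufc"
proof (rule set_eqI)
  fix i show "i \<in> {i \<in> {1..length f}. wat f i \<in> {1..k}} \<longleftrightarrow> i \<in> Ufc" using f_pos[of i] lf by auto
qed

lemma Xb: "{i \<in> {1..length f}. wat f i \<notin> {1..k}} = Uf"
proof (rule set_eqI)
  fix i show "i \<in> {i \<in> {1..length f}. wat f i \<notin> {1..k}} \<longleftrightarrow> i \<in> Uf" using f_pos[of i] lf by auto
qed

lemma Uf_open: "Uf \<in> T"
proof (rule upset_open[OF T Uf_sub])
  fix i j assume "i \<in> Uf" "j \<in> {1..n}" "tleq T i j"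
  then show "j \<in> Uf" using f_mono[of i j] by auto
qed

lemma set_uf: "set uf = {1..k}" using packed_set[OF pf] kf by auto
lemma wmax_uf: "wmax uf = k" by (rule wmax_interval[OF set_uf])
lemma set_fb: "set fb = {Suc k..wmax f}" using packed_set[OF pf] kf by auto

lemma fw_s: "length uf = card Ufc" "\<And>i. i \<in> Ufc \<Longrightarrow> wat uf (std_map Ufc i) = wat f i"
  using filter_wat[of "\<lambda>x. x \<in> {1..k}" f, unfolded Xs] by auto
lemma fw_b: "length fb = card Uf" "\<And>i. i \<in> Uf \<Longrightarrow> wat fb (std_map Uf i) = wat f i"
  using filter_wat[of "\<lambda>x. x \<notin> {1..k}" f, unfolded Xb] by auto

lemma wat_vf: "i \<in> Uf \<Longrightarrow> wat vf (std_map Uf i) = wat f i - k"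
proof -
  assume i: "i \<in> Uf"
  have a: "std_map Uf i \<in> {1..length fb}" using std_map_range[OF fUf i] fw_b(1) by simp
  have "wat vf (std_map Uf i) = std_map (set fb) (wat f i)" using wat_pack[OF a] fw_b(2)[OF i] by simp
  also have "\<dots> = std_map {Suc k..wmax f} (wat f i)" by (simp only: set_fb)
  also have "\<dots> = wat f i - k" using i f_pos[of i] by (intro std_map_interval) auto
  finally show ?thesis .
qed

lemma uf_part: "uf \<in> Tpartitions (S Ufc)"
proof -
  have p: "packed uf" using set_uf by (auto simp: packed_def)
  show ?thesis unfolding part_S[OF Diff_subset fw_s(1)]
    using p f_mono fw_s(2) by auto
qed

lemma vf_part: "vf \<in> Tpartitions (S Uf)"
proof -
  have l: "length vf = card Uf" using fw_b(1) by simp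
  show ?thesis unfolding part_S[OF Uf_sub l]
    using packed_pack f_mono wat_vf by (auto intro: diff_le_mono)
qed

lemma mg_f: "mgw n Uf uf vf = f"
proof (rule list_eq_wat)
  show "length (mgw n Uf uf vf) = length f" using lf by simp
next
  fix i assume "i \<in> {1..length (mgw n Uf uf vf)}"
  then have i: "i \<in> {1..n}" by simp
  show "wat (mgw n Uf uf vf) i = wat f i"
  proof (cases "i \<in> Uf")
    case True then show ?thesis using i wat_vf[OF True] wmax_uf by (simp add: wat_mgw)
  next
    case False
    then have "i \<in> Ufc" using i by simp
    then show ?thesis using i False fw_s(2) by (simp add: wat_mgw)
  qed
qed

end
end


lemma lookup_tensor_single:
  "lk (tensor_map F G (Poly_Mapping.single (b, d) 1)) (u, v) = lk (F (Poly_Mapping.single b 1)) u * lk (G (Poly_Mapping.single d 1)) v"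
proof -
  let ?a = "F (Poly_Mapping.single b 1)" and ?b = "G (Poly_Mapping.single d 1)"
  have "lk (tensor_map F G (Poly_Mapping.single (b, d) 1)) (u, v) =
    (\<Sum>p\<in>Poly_Mapping.keys ?a \<times> Poly_Mapping.keys ?b. if p = (u, v) then lk ?a (fst p) * lk ?b (snd p) else 0)"
    apply (simp only: tensor_map_def lin_ext_single1 prod.case lookup_sum sum.cartesian_product)
    apply (intro sum.cong refl)
    apply (auto simp: lookup_single when_def split: if_splits)
    done
  also have "\<dots> = (if (u, v) \<in> Poly_Mapping.keys ?a \<times> Poly_Mapping.keys ?b then lk ?a u * lk ?b v else 0)"
    by (subst sum.delta) auto
  also have "\<dots> = lk ?a u * lk ?b v" by (auto simp: in_keys_iff)
  finally show ?thesis .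
qed

context coprod_setup
begin

lemma coprod_basis:
  "WQ_delta (gamma_basis q1 q2 q3 T) = tensor_map (Gamma q1 q2 q3) (Gamma q1 q2 q3) (topo_delta T)"
proof (rule poly_mapping_eqI)
  fix p :: "nat list \<times> nat list"
  obtain u v where p: "p = (u, v)" by (cases p)
  let ?c = "coef q1 q2 q3"
  define S1 where "S1 = {x \<in> Sigma (Tpartitions T) (\<lambda>f. {0..wmax f}).
     (filter (\<lambda>y. y \<in> {1..snd x}) (fst x), pack (filter (\<lambda>y. y \<notin> {1..snd x}) (fst x))) = (u, v)}"
  define S2 where "S2 = {U \<in> T. u \<in> Tpartitions (S ({1..n} - U)) \<and> v \<in> Tpartitions (S U)}"
  have fSig: "finite (Sigma (Tpartitions T) (\<lambda>f. {0..wmax f}))" by (simp add: finite_Tpartitions)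
  have "lk (WQ_delta (gamma_basis q1 q2 q3 T)) (u, v) =
     (\<Sum>f\<in>Tpartitions T. ?c T f * (\<Sum>k\<in>{0..wmax f}.
        if (filter (\<lambda>y. y \<in> {1..k}) f, pack (filter (\<lambda>y. y \<notin> {1..k}) f)) = (u, v) then 1 else 0))"
    unfolding WQ_delta_def
    by (subst lookup_lin_ext_sup[OF finite_Tpartitions keys_gamma])
       (intro sum.cong refl, simp add: lookup_gamma wq_delta_def lookup_sum lookup_single when_def)
  also have "\<dots> = (\<Sum>x\<in>Sigma (Tpartitions T) (\<lambda>f. {0..wmax f}).
     if (filter (\<lambda>y. y \<in> {1..snd x}) (fst x), pack (filter (\<lambda>y. y \<notin> {1..snd x}) (fst x))) = (u, v) then ?c T (fst x) else 0)"
  proof -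
    have "(\<Sum>f\<in>Tpartitions T. ?c T f * (\<Sum>k\<in>{0..wmax f}.
        if (filter (\<lambda>y. y \<in> {1..k}) f, pack (filter (\<lambda>y. y \<notin> {1..k}) f)) = (u, v) then 1 else 0)) =
      (\<Sum>f\<in>Tpartitions T. \<Sum>k\<in>{0..wmax f}.
        if (filter (\<lambda>y. y \<in> {1..k}) f, pack (filter (\<lambda>y. y \<notin> {1..k}) f)) = (u, v) then ?c T f else 0)"
      by (auto simp: sum_distrib_left intro!: sum.cong)
    also have "\<dots> = (\<Sum>(f, k)\<in>Sigma (Tpartitions T) (\<lambda>f. {0..wmax f}).
        if (filter (\<lambda>y. y \<in> {1..k}) f, pack (filter (\<lambda>y. y \<notin> {1..k}) f)) = (u, v) then ?c T f else 0)"
      by (rule sum.Sigma) (simp_all add: finite_Tpartitions)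
    finally show ?thesis by (simp add: case_prod_beta')
  qed
  also have "\<dots> = (\<Sum>x\<in>S1. ?c T (fst x))"
    unfolding S1_def by (subst sum.inter_filter[OF fSig]) simp
  also have "\<dots> = (\<Sum>U\<in>S2. ?c (S ({1..n} - U)) u * ?c (S U) v)"
  proof (rule sum.reindex_bij_witness[where j = "\<lambda>x. {i \<in> {1..n}. snd x < wat (fst x) i}"
        and i = "\<lambda>U. (mgw n U u v, wmax u)"])
    fix x assume x: "x \<in> S1"
    obtain f k where fk: "x = (f, k)" by (cases x)
    have fP: "f \<in> Tpartitions T" and kf: "k \<le> wmax f" and uu: "filter (\<lambda>y. y \<in> {1..k}) f = u"
      and vv: "pack (filter (\<lambda>y. y \<notin> {1..k}) f) = v" using x by (auto simp: S1_def fk)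
    show "(mgw n {i \<in> {1..n}. snd x < wat (fst x) i} u v, wmax u) = x"
      using mg_f[OF fP kf] wmax_uf[OF fP kf] uu vv by (simp add: fk)
    show "{i \<in> {1..n}. snd x < wat (fst x) i} \<in> S2"
      using Uf_open[OF fP kf] uf_part[OF fP kf] vf_part[OF fP kf] uu vv by (simp add: fk S2_def)
    have UT: "{i \<in> {1..n}. k < wat f i} \<in> T" by (rule Uf_open[OF fP kf])
    have uP: "u \<in> Tpartitions (S ({1..n} - {i \<in> {1..n}. k < wat f i}))" using uf_part[OF fP kf] uu by simp
    have vP: "v \<in> Tpartitions (S {i \<in> {1..n}. k < wat f i})" using vf_part[OF fP kf] vv by simp
    have "mgw n {i \<in> {1..n}. k < wat f i} u v = f" using mg_f[OF fP kf] uu vv by simp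
    then show "?c (S ({1..n} - {i \<in> {1..n}. snd x < wat (fst x) i})) u * ?c (S {i \<in> {1..n}. snd x < wat (fst x) i}) v = ?c T (fst x)"
      using coef_mg[OF UT uP vP, of q1 q2 q3] by (simp add: fk)
  next
    fix U assume U: "U \<in> S2"
    then have UT: "U \<in> T" and uP: "u \<in> Tpartitions (S ({1..n} - U))" and vP: "v \<in> Tpartitions (S U)"
      by (auto simp: S2_def)
    show "{i \<in> {1..n}. snd (mgw n U u v, wmax u) < wat (fst (mgw n U u v, wmax u)) i} = U"
      using up_mg[OF UT uP vP] by simp
    have "wmax u \<le> wmax (mgw n U u v)" using wmax_mg[OF UT uP vP] by simp
    then show "(mgw n U u v, wmax u) \<in> S1"
      using mg_part[OF UT uP vP] filter_small[OF UT uP vP] filter_big[OF UT uP vP] by (simp add: S1_def)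
  qed
  also have "\<dots> = (\<Sum>U\<in>T. lk (gamma_basis q1 q2 q3 (S ({1..n} - U))) u * lk (gamma_basis q1 q2 q3 (S U)) v)"
    unfolding S2_def by (subst sum.inter_filter[OF finite_top[OF T]]) (intro sum.cong refl, simp add: lookup_gamma)
  also have "\<dots> = lk (tensor_map (Gamma q1 q2 q3) (Gamma q1 q2 q3) (topo_delta T)) (u, v)"
  proof -
    have "tensor_map (Gamma q1 q2 q3) (Gamma q1 q2 q3) (topo_delta T) =
      (\<Sum>U\<in>T. tensor_map (Gamma q1 q2 q3) (Gamma q1 q2 q3) (Poly_Mapping.single (S ({1..n} - U), S U) 1))"
      unfolding topo_delta_def tdeg_top[OF T] restr_def[symmetric]
      by (simp add: tensor_map_def[of "Gamma q1 q2 q3" "Gamma q1 q2 q3"] lin_ext_sum)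
    then show ?thesis by (simp add: lookup_sum lookup_tensor_single Gamma_single)
  qed
  finally show "lk (WQ_delta (gamma_basis q1 q2 q3 T)) p = lk (tensor_map (Gamma q1 q2 q3) (Gamma q1 q2 q3) (topo_delta T)) p"
    by (simp add: p)
qed

end

lemma conj5:
  assumes x: "Poly_Mapping.keys x \<subseteq> all_topologies"
  shows "WQ_delta (Gamma q1 q2 q3 x) = tensor_map (Gamma q1 q2 q3) (Gamma q1 q2 q3) (HT_delta x)"
proof -
  have "WQ_delta (Gamma q1 q2 q3 x) = lin_ext (\<lambda>b. WQ_delta (gamma_basis q1 q2 q3 b)) x"
    unfolding WQ_delta_def Gamma_def lin_ext_comp ..
  also have "\<dots> = lin_ext (\<lambda>b. tensor_map (Gamma q1 q2 q3) (Gamma q1 q2 q3) (topo_delta b)) x"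
  proof (rule lin_ext_cong)
    fix b assume "b \<in> Poly_Mapping.keys x"
    then obtain n where "b \<in> topologies n" using x by (auto simp: all_topologies_def)
    then interpret coprod_setup b n by unfold_locales
    show "WQ_delta (gamma_basis q1 q2 q3 b) = tensor_map (Gamma q1 q2 q3) (Gamma q1 q2 q3) (topo_delta b)"
      by (rule coprod_basis)
  qed
  also have "\<dots> = tensor_map (Gamma q1 q2 q3) (Gamma q1 q2 q3) (HT_delta x)"
    unfolding HT_delta_def tensor_map_def[of "Gamma q1 q2 q3" "Gamma q1 q2 q3"] lin_ext_comp ..
  finally show ?thesis .
qed


definition tw :: "nat list \<Rightarrow> nat set set" where
  "tw w = (\<lambda>k. {i \<in> {1..length w}. k < wat w i}) ` {0..wmax w}"

lemma pm_smult_single1: "pm_smult c (Poly_Mapping.single g 1) = Poly_Mapping.single g c"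
  by (rule poly_mapping_eqI) (simp add: lookup_single when_def)

lemma keys_pm_smult: "Poly_Mapping.keys (pm_smult c x) \<subseteq> Poly_Mapping.keys x"
  by (auto simp: in_keys_iff)

context
  fixes w :: "nat list"
  assumes pw: "packed w"
begin

abbreviation "nn \<equiv> length w"

lemma w_pos: "i \<in> {1..nn} \<Longrightarrow> 1 \<le> wat w i \<and> wat w i \<le> wmax w"
  using packed_wat_pos[OF pw] by simp

lemma tw_top: "tw w \<in> topologies nn"
  unfolding topologies_def is_topology_def mem_Collect_eq
proof (intro conjI ballI)
  show "tw w \<subseteq> Pow {1..nn}" by (auto simp: tw_def)
  have "{i \<in> {1..nn}. wmax w < wat w i} = {}" using w_pos by fastforce
  then show "{} \<in> tw w" unfolding tw_def by (intro image_eqI[of _ _ "wmax w"]) auto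
  have "{i \<in> {1..nn}. 0 < wat w i} = {1..nn}" using w_pos by fastforce
  then show "{1..nn} \<in> tw w" unfolding tw_def by (intro image_eqI[of _ _ "0"]) auto
next
  fix A B assume A: "A \<in> tw w" and B: "B \<in> tw w"
  obtain a where a: "a \<in> {0..wmax w}" "A = {i \<in> {1..nn}. a < wat w i}" using A by (auto simp: tw_def)
  obtain b where b: "b \<in> {0..wmax w}" "B = {i \<in> {1..nn}. b < wat w i}" using B by (auto simp: tw_def)
  have "A \<union> B = {i \<in> {1..nn}. min a b < wat w i}" using a b by auto
  moreover have "min a b \<in> {0..wmax w}" using a b by auto
  ultimately show "A \<union> B \<in> tw w" unfolding tw_def by blast
  have "A \<inter> B = {i \<in> {1..nn}. max a b < wat w i}" using a b by auto
  moreover have "max a b \<in> {0..wmax w}" using a b by auto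
  ultimately show "A \<inter> B \<in> tw w" unfolding tw_def by blast
qed

lemma tdeg_tw: "tdeg (tw w) = nn" using tdeg_top[OF tw_top] .

lemma tleq_tw: "i \<in> {1..nn} \<Longrightarrow> j \<in> {1..nn} \<Longrightarrow> tleq (tw w) i j \<longleftrightarrow> wat w i \<le> wat w j"
proof
  assume i: "i \<in> {1..nn}" and j: "j \<in> {1..nn}" and t: "tleq (tw w) i j"
  show "wat w i \<le> wat w j"
  proof (rule ccontr)
    assume c: "\<not> wat w i \<le> wat w j"
    define V where "V = {i \<in> {1..nn}. wat w j < wat w i}"
    have "wat w j \<in> {0..wmax w}" using w_pos[OF j] by simp
    then have V: "V \<in> tw w" unfolding tw_def V_def by (rule imageI)
    have iV: "i \<in> V" using i c by (simp add: V_def)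
    have jV: "j \<notin> V" by (simp add: V_def)
    have "\<forall>U\<in>tw w. i \<in> U \<longrightarrow> j \<in> U" using t by (simp add: tleq_def)
    then show False using V iV jV by blast
  qed
next
  assume i: "i \<in> {1..nn}" and j: "j \<in> {1..nn}" and le: "wat w i \<le> wat w j"
  show "tleq (tw w) i j" unfolding tleq_def
  proof (intro ballI impI)
    fix U assume U: "U \<in> tw w" and iU: "i \<in> U"
    obtain k where k: "U = {i \<in> {1..nn}. k < wat w i}" using U by (auto simp: tw_def)
    have "k < wat w i" using iU k by simp
    then have "k < wat w j" using le by simp
    then show "j \<in> U" using j k by simp
  qed
qed

lemma w_in_tw: "w \<in> Tpartitions (tw w)"
  unfolding Tpartitions_def tdeg_tw using pw tleq_tw by auto

lemma coef_tw: "coef q1 q2 q3 (tw w) w = 1"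
proof -
  have "E1 (tleq (tw w)) (wat w) {1..nn} = {}" "E2 (tleq (tw w)) (wat w) {1..nn} = {}"
    "E3 (tleq (tw w)) (wat w) {1..nn} = {}"
    by (auto simp: E1_def E2_def E3_def tleq_tw)
  then show ?thesis by (simp add: coef_def ell1_E ell2_E ell3_E tdeg_tw)
qed

lemma part_le:
  assumes g: "g \<in> Tpartitions (tw w)" and i: "i \<in> {1..nn}"
  shows "wat g i \<le> wat w i"
proof -
  have pg: "packed g" and lg: "length g = nn" using g Tpartitions_packed tdeg_tw by auto
  have mono: "\<And>a b. a \<in> {1..nn} \<Longrightarrow> b \<in> {1..nn} \<Longrightarrow> wat w a \<le> wat w b \<Longrightarrow> wat g a \<le> wat g b"
    using g tleq_tw by (auto simp: Tpartitions_def tdeg_tw)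
  define J where "J = {j \<in> {1..nn}. wat g j < wat g i}"
  have wJ: "wat w ` J \<subseteq> {1..wat w i - 1}"
  proof
    fix x assume "x \<in> wat w ` J"
    then obtain j where j: "j \<in> J" "x = wat w j" by blast
    have "wat w j < wat w i" using j mono[of i j] i unfolding J_def by force
    then show "x \<in> {1..wat w i - 1}" using j w_pos[of j] unfolding J_def by auto
  qed
  define G where "G x = wat g (SOME j. j \<in> J \<and> wat w j = x)" for x
  have Geq: "G (wat w j) = wat g j" if j: "j \<in> J" for j
  proof -
    have ex: "\<exists>j'. j' \<in> J \<and> wat w j' = wat w j" using j by blast
    define j' where "j' = (SOME j'. j' \<in> J \<and> wat w j' = wat w j)"
    have j': "j' \<in> J" "wat w j' = wat w j" using someI_ex[OF ex] unfolding j'_def by auto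
    have "wat g j' = wat g j" using mono[of j' j] mono[of j j'] j j' unfolding J_def by force
    then show ?thesis unfolding G_def j'_def[symmetric] .
  qed
  have "wat g ` J = G ` (wat w ` J)" using Geq by (auto simp: image_image intro!: image_cong)
  have fJ: "finite J" by (simp add: J_def)
  have "card (wat g ` J) \<le> card (wat w ` J)" unfolding \<open>wat g ` J = G ` (wat w ` J)\<close>
    by (rule card_image_le[OF finite_imageI[OF fJ]])
  also have "\<dots> \<le> wat w i - 1" using card_mono[OF _ wJ] by simp
  finally have c1: "card (wat g ` J) \<le> wat w i - 1" .
  have sub: "{1..wat g i - 1} \<subseteq> wat g ` J"
  proof
    fix a assume a: "a \<in> {1..wat g i - 1}"
    have "wat g i \<in> set g" using wat_in_set[of i g] i lg by simp
    then have "a \<in> set g" using a packed_set[OF pg] by auto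
    then obtain j where j: "j \<in> {1..length g}" "wat g j = a" using set_wat[of g] by auto
    then show "a \<in> wat g ` J" using a lg unfolding J_def by force
  qed
  have "wat g i - 1 \<le> card (wat g ` J)" using card_mono[OF _ sub] by (simp add: J_def)
  with c1 have "wat g i - 1 \<le> wat w i - 1" by simp
  moreover have "1 \<le> wat g i" using packed_wat_pos[OF pg, of i] i lg by simp
  moreover have "1 \<le> wat w i" using w_pos[OF i] by simp
  ultimately show ?thesis by arith
qed

lemma sum_list_wat: "sum_list u = (\<Sum>i<length u. wat u (Suc i))"
  by (simp add: sum_list_sum_nth atLeast0LessThan wat_def)

lemma part_less:
  assumes g: "g \<in> Tpartitions (tw w)" and ne: "g \<noteq> w"
  shows "sum_list g < sum_list w"
proof -
  have lg: "length g = nn" using g Tpartitions_packed tdeg_tw by auto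
  have le: "\<And>p. p \<in> {..<nn} \<Longrightarrow> wat g (Suc p) \<le> wat w (Suc p)" using part_le[OF g] by simp
  have "\<exists>i\<in>{1..length g}. wat g i \<noteq> wat w i"
  proof (rule ccontr)
    assume "\<not> ?thesis"
    then have "g = w" using list_eq_wat[of g w] lg by auto
    then show False using ne by simp
  qed
  then obtain i where i: "i \<in> {1..nn}" "wat g i \<noteq> wat w i" using lg by auto
  define p where "p = i - 1"
  have p: "p < nn" "wat g (Suc p) \<noteq> wat w (Suc p)" using i by (auto simp: p_def)
  have "(\<Sum>i<nn. wat g (Suc i)) < (\<Sum>i<nn. wat w (Suc i))"
    by (rule sum_strict_mono_ex1) (use le p in \<open>auto intro: order.not_eq_order_implies_strict\<close>)
  then show ?thesis by (simp add: sum_list_wat lg)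
qed

end

lemma surj_single:
  "packed w \<Longrightarrow> \<exists>x. Poly_Mapping.keys x \<subseteq> all_topologies \<and> Gamma q1 q2 q3 x = Poly_Mapping.single w 1"
proof (induction "sum_list w" arbitrary: w rule: less_induct)
  case less
  note pw = less.prems
  let ?A = "Tpartitions (tw w) - {w}"
  have "\<forall>g\<in>?A. \<exists>x. Poly_Mapping.keys x \<subseteq> all_topologies \<and> Gamma q1 q2 q3 x = Poly_Mapping.single g 1"
  proof
    fix g assume g: "g \<in> ?A"
    then have "sum_list g < sum_list w" using part_less[OF pw] by blast
    moreover have "packed g" using g Tpartitions_packed by blast
    ultimately show "\<exists>x. Poly_Mapping.keys x \<subseteq> all_topologies \<and> Gamma q1 q2 q3 x = Poly_Mapping.single g 1"
      using less.hyps by blast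
  qed
  then obtain X where X: "\<And>g. g \<in> ?A \<Longrightarrow> Poly_Mapping.keys (X g) \<subseteq> all_topologies \<and> Gamma q1 q2 q3 (X g) = Poly_Mapping.single g 1"
    by metis
  define x where "x = Poly_Mapping.single (tw w) 1 - (\<Sum>g\<in>?A. pm_smult (coef q1 q2 q3 (tw w) g) (X g))"
  have fA: "finite ?A" using finite_Tpartitions by blast
  have keys: "Poly_Mapping.keys x \<subseteq> all_topologies"
  proof -
    have "tw w \<in> all_topologies" using tw_top[OF pw] by (auto simp: all_topologies_def)
    moreover have "Poly_Mapping.keys (\<Sum>g\<in>?A. pm_smult (coef q1 q2 q3 (tw w) g) (X g)) \<subseteq> all_topologies"
      using keys_sum X keys_pm_smult by fastforce
    ultimately show ?thesis unfolding x_def using keys_diff by fastforce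
  qed
  have "gamma_basis q1 q2 q3 (tw w) = (\<Sum>g\<in>Tpartitions (tw w). Poly_Mapping.single g (coef q1 q2 q3 (tw w) g))"
    by (simp add: gamma_basis_def coef_def)
  also have "\<dots> = Poly_Mapping.single w 1 + (\<Sum>g\<in>?A. Poly_Mapping.single g (coef q1 q2 q3 (tw w) g))"
    using w_in_tw[OF pw] by (simp add: sum.remove finite_Tpartitions coef_tw[OF pw])
  finally have gb: "gamma_basis q1 q2 q3 (tw w) = Poly_Mapping.single w 1 + (\<Sum>g\<in>?A. Poly_Mapping.single g (coef q1 q2 q3 (tw w) g))" .
  have "Gamma q1 q2 q3 x = gamma_basis q1 q2 q3 (tw w) - (\<Sum>g\<in>?A. pm_smult (coef q1 q2 q3 (tw w) g) (Gamma q1 q2 q3 (X g)))"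
    unfolding x_def Gamma_def lin_ext_minus lin_ext_sum lin_ext_smult by simp
  also have "\<dots> = gamma_basis q1 q2 q3 (tw w) - (\<Sum>g\<in>?A. Poly_Mapping.single g (coef q1 q2 q3 (tw w) g))"
    using X by (simp add: pm_smult_single1)
  also have "\<dots> = Poly_Mapping.single w 1" using gb by simp
  finally show ?case using keys by blast
qed

lemma conj7:
  assumes y: "Poly_Mapping.keys y \<subseteq> {w. packed w}"
  shows "\<exists>x. Poly_Mapping.keys x \<subseteq> all_topologies \<and> Gamma q1 q2 q3 x = y"
proof -
  have "\<forall>w\<in>Poly_Mapping.keys y. \<exists>x. Poly_Mapping.keys x \<subseteq> all_topologies \<and> Gamma q1 q2 q3 x = Poly_Mapping.single w 1"
    using y surj_single by blast
  then obtain X where X: "\<And>w. w \<in> Poly_Mapping.keys y \<Longrightarrow> Poly_Mapping.keys (X w) \<subseteq> all_topologies \<and> Gamma q1 q2 q3 (X w) = Poly_Mapping.single w 1"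
    by metis
  define x where "x = (\<Sum>w\<in>Poly_Mapping.keys y. pm_smult (lk y w) (X w))"
  have "Poly_Mapping.keys x \<subseteq> all_topologies"
    unfolding x_def using keys_sum X keys_pm_smult by fastforce
  moreover have "Gamma q1 q2 q3 x = y"
  proof -
    have "Gamma q1 q2 q3 x = (\<Sum>w\<in>Poly_Mapping.keys y. Poly_Mapping.single w (lk y w))"
      unfolding x_def Gamma_def lin_ext_sum lin_ext_smult using X
      by (intro sum.cong refl) (simp add: Gamma_def[symmetric] pm_smult_single1)
    also have "\<dots> = y"
      by (rule poly_mapping_eqI) (simp add: lookup_sum lookup_single when_def sum.delta' in_keys_iff)
    finally show ?thesis .
  qed
  ultimately show ?thesis by blast
qed


theorem proposition14:
  fixes q1 q2 q3 :: "'k::field"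
  shows
    "(\<forall>x::nat set set \<Rightarrow>\<^sub>0 'k. Poly_Mapping.keys x \<subseteq> all_topologies \<longrightarrow> Poly_Mapping.keys (Gamma q1 q2 q3 x) \<subseteq> {w. packed w})
   \<and> (\<forall>n. \<forall>x::nat set set \<Rightarrow>\<^sub>0 'k. Poly_Mapping.keys x \<subseteq> topologies n \<longrightarrow>
          Poly_Mapping.keys (Gamma q1 q2 q3 x) \<subseteq> {w. packed w \<and> length w = n})
   \<and> Gamma q1 q2 q3 HT_unit = WQ_unit
   \<and> (\<forall>x y. Poly_Mapping.keys x \<subseteq> all_topologies \<longrightarrow> Poly_Mapping.keys y \<subseteq> all_topologies \<longrightarrow>
          Gamma q1 q2 q3 (HT_mult x y) = WQ_mult (Gamma q1 q2 q3 x) (Gamma q1 q2 q3 y))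
   \<and> (\<forall>x. Poly_Mapping.keys x \<subseteq> all_topologies \<longrightarrow>
          WQ_delta (Gamma q1 q2 q3 x) = tensor_map (Gamma q1 q2 q3) (Gamma q1 q2 q3) (HT_delta x))
   \<and> (\<forall>x. Poly_Mapping.keys x \<subseteq> all_topologies \<longrightarrow> WQ_counit (Gamma q1 q2 q3 x) = HT_counit x)
   \<and> (\<forall>y. Poly_Mapping.keys y \<subseteq> {w. packed w} \<longrightarrow> (\<exists>x. Poly_Mapping.keys x \<subseteq> all_topologies \<and> Gamma q1 q2 q3 x = y))
   \<and> (\<forall>x. Poly_Mapping.keys x \<subseteq> all_topologies \<longrightarrow>
          WQ_j (Gamma q2 q1 q3 x) = Gamma q1 q2 q3 (HT_iota x))"
  proof (intro conjI allI impI)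
  fix x :: "nat set set \<Rightarrow>\<^sub>0 'k" show "Poly_Mapping.keys (Gamma q1 q2 q3 x) \<subseteq> {w. packed w}" by (rule conj1)
next
  fix n and x :: "nat set set \<Rightarrow>\<^sub>0 'k" assume "Poly_Mapping.keys x \<subseteq> topologies n"
  then show "Poly_Mapping.keys (Gamma q1 q2 q3 x) \<subseteq> {w. packed w \<and> length w = n}" by (rule conj2)
next
  show "Gamma q1 q2 q3 HT_unit = WQ_unit" by (rule conj3)
next
  fix x y :: "nat set set \<Rightarrow>\<^sub>0 'k" assume "Poly_Mapping.keys x \<subseteq> all_topologies" "Poly_Mapping.keys y \<subseteq> all_topologies"
  then show "Gamma q1 q2 q3 (HT_mult x y) = WQ_mult (Gamma q1 q2 q3 x) (Gamma q1 q2 q3 y)" by (rule conj4)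
next
  fix x :: "nat set set \<Rightarrow>\<^sub>0 'k" assume "Poly_Mapping.keys x \<subseteq> all_topologies"
  then show "WQ_delta (Gamma q1 q2 q3 x) = tensor_map (Gamma q1 q2 q3) (Gamma q1 q2 q3) (HT_delta x)" by (rule conj5)
next
  fix x :: "nat set set \<Rightarrow>\<^sub>0 'k" assume "Poly_Mapping.keys x \<subseteq> all_topologies"
  then show "WQ_counit (Gamma q1 q2 q3 x) = HT_counit x" by (rule conj6)
next
  fix y :: "nat list \<Rightarrow>\<^sub>0 'k" assume "Poly_Mapping.keys y \<subseteq> {w. packed w}"
  then show "\<exists>x. Poly_Mapping.keys x \<subseteq> all_topologies \<and> Gamma q1 q2 q3 x = y" by (rule conj7)
next
  fix x :: "nat set set \<Rightarrow>\<^sub>0 'k" assume "Poly_Mapping.keys x \<subseteq> all_topologies"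
  then show "WQ_j (Gamma q2 q1 q3 x) = Gamma q1 q2 q3 (HT_iota x)" by (rule conj8)
qed

end
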